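(* Let $L$ be a multisorted algebra in the first order signature without equality. Then $L$ satisfies axioms (0)–(10) if and only if $L$ is isomorphic to a subalgebra of the first order algebra (without equality) $A(W)$ of some set $W$.
   Context: Throughout, the Boolean prime ideal theorem is assumed. Signature. There is a sort $n$ for each natural number $n\ge0$. For every function $\alpha\colon\{1,\dots,n\}\to\{1,\dots,k\}$ there is a unary function symbol ("substitution") $\alpha\colon n\to k$ (argument of sort $n$, value of sort $k$). Each sort has constants $0,1$, binary $\vee,\wedge$, unary $\neg$; for each $n$ there is $\exists\colon n+1\to n$. For substitutions $\alpha\colon k\to n$, $\beta\colon n\to m$, $\beta\circ\alpha\colon k\to m$ is the substitution symbol of the composite function; $\beta(\alpha(r))$ is composition in an algebra; $\mathrm{id}$ is the identity substitution. The associated cylindrification of $\exists\colon n+1\to n$ is $c\colon n\to n+1$, $c(i)=i$; $\exists^{(n)}$ is $n$-fold projection. Concrete algebras. For a set $W$: $\alpha^{\mathrm{tuple}}(x_1,\dots,x_k)=(x_{\alpha(1)},\dots,x_{\alpha(n)})$, $\alpha^{\mathrm{relation}}(r)=\{\bar x\in W^k:\alpha^{\mathrm{tuple}}(\bar x)\in r\}$. The first order algebra $A(W)$ (without equality) interprets sort $n$ as $\mathcal P(W^n)$, $\alpha$ as $\alpha^{\mathrm{relation}}$, $0,1,\vee,\wedge,\neg$ as $\emptyset,W^n,\cup,\cap$, complement in $W^n$, and $\exists(r)=\{(x_1,\dots,x_n):\exists y\,(x_1,\dots,x_n,y)\in r\}$. Partitioning cylindrifications: for $k_1,\dots,k_m$,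 $n=\sum k_j$, the substitutions $c_i\colon k_i\to n$, $c_i(l)=l+\sum_{j<i}k_j$. $x\le y$ (also $y\ge x$) means $x=x\wedge y$. Axioms: (0) For partitioning cylindrifications $c_1,\dots,c_m$ and $r_i,s_i$ of sort $k_i$: if $\bigvee_i c_i(s_i)\ge\bigwedge_i c_i(r_i)$ then $s_i\ge r_i$ for some $i$ (including $m=0$: $0\ge1$ fails in sort $0$). (1) Each sort is a bounded distributive lattice. (2) Substitutions preserve $0,1,\vee,\wedge$. (3) $(\beta\circ\alpha)(r)=\beta(\alpha(r))$. (4) $\mathrm{id}(r)=r$. (5) $\alpha(\neg r)=\neg\alpha(r)$. (6) $r\vee\neg r=1$, $r\wedge\neg r=0$. (7) $\exists(0)=0$, $\exists(r\vee s)=\exists(r)\vee\exists(s)$. (8) $r\le c(\exists(r))$. (9) $\exists(r\wedge c(s))=\exists(r)\wedge s$. (10) For substitutions $\alpha_i\colon k_i\to m$ ($i=1,\dots,n$), let $\beta_i\colon k_i+1\to m+n$ with $\beta_i(j)=\alpha_i(j)$ for $j\le k_i$ and $\beta_i(k_i+1)=m+i$. Then for all $r_i$ of sort $k_i+1$: $\exists^{(n)}(\bigwedge_i\beta_i(r_i))=\bigwedge_i\alpha_i(\exists(r_i))$. *)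

theory Defs
  imports Main
begin

text \<open>Conventions: indices are 0-based. A function alpha from {1..n} to {1..k}
  is represented by a list of length n with entries < k (entry i = alpha(i+1)-1).
  The substitution symbol alpha : n -> k is applied as msubst L k alpha
  (argument sort = length alpha, value sort = k). A multisorted algebra uses one ambient type with a carrier
  set for each sort n and sort-indexed operations.\<close>

record 'a msalg =
  carr    :: "nat \<Rightarrow> 'a set"
  msubst  :: "nat \<Rightarrow> nat list \<Rightarrow> 'a \<Rightarrow> 'a"
  bot_s   :: "nat \<Rightarrow> 'a"
  top_s   :: "nat \<Rightarrow> 'a"
  sup_s   :: "nat \<Rightarrow> 'a \<Rightarrow> 'a \<Rightarrow> 'a"
  inf_s   :: "nat \<Rightarrow> 'a \<Rightarrow> 'a \<Rightarrow> 'a"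
  neg_s   :: "nat \<Rightarrow> 'a \<Rightarrow> 'a"
  ex_s    :: "nat \<Rightarrow> 'a \<Rightarrow> 'a"   (* ex_s n : sort n+1 -> sort n *)

definition subst_sym :: "nat \<Rightarrow> nat \<Rightarrow> nat list \<Rightarrow> bool" where
  "subst_sym n k \<alpha> \<longleftrightarrow> length \<alpha> = n \<and> (\<forall>j\<in>set \<alpha>. j < k)"

definition is_msalg :: "'a msalg \<Rightarrow> bool" where
  "is_msalg L \<longleftrightarrow>
     (\<forall>n. bot_s L n \<in> carr L n \<and> top_s L n \<in> carr L n) \<and>
     (\<forall>n. \<forall>x\<in>carr L n. \<forall>y\<in>carr L n.
          sup_s L n x y \<in> carr L n \<and> inf_s L n x y \<in> carr L n) \<and>
     (\<forall>n. \<forall>x\<in>carr L n. neg_s L n x \<in> carr L n) \<and>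
     (\<forall>n. \<forall>x\<in>carr L (Suc n). ex_s L n x \<in> carr L n) \<and>
     (\<forall>n k \<alpha>. subst_sym n k \<alpha> \<longrightarrow> (\<forall>x\<in>carr L n. msubst L k \<alpha> x \<in> carr L k))"

definition le_s :: "'a msalg \<Rightarrow> nat \<Rightarrow> 'a \<Rightarrow> 'a \<Rightarrow> bool" where
  "le_s L n x y \<longleftrightarrow> x = inf_s L n x y"

definition big_inf :: "'a msalg \<Rightarrow> nat \<Rightarrow> 'a list \<Rightarrow> 'a" where
  "big_inf L n xs = foldr (inf_s L n) xs (top_s L n)"

definition big_sup :: "'a msalg \<Rightarrow> nat \<Rightarrow> 'a list \<Rightarrow> 'a" where
  "big_sup L n xs = foldr (sup_s L n) xs (bot_s L n)"

definition cyl :: "nat \<Rightarrow> nat list" where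
  "cyl n = [0..<n]"

fun ex_iter :: "'a msalg \<Rightarrow> nat \<Rightarrow> nat \<Rightarrow> 'a \<Rightarrow> 'a" where
  "ex_iter L m 0 r = r"
| "ex_iter L m (Suc n) r = ex_iter L m n (ex_s L (m + n) r)"

text \<open>partitioning cylindrification c_i : k_i -> sum ks\<close>
definition part_cyl :: "nat list \<Rightarrow> nat \<Rightarrow> nat list" where
  "part_cyl ks i = [sum_list (take i ks)..<sum_list (take i ks) + ks ! i]"

definition ax0 :: "'a msalg \<Rightarrow> bool" where
  "ax0 L \<longleftrightarrow> (\<forall>ks rs ss. length rs = length ks \<and> length ss = length ks \<and>
      (\<forall>i<length ks. rs ! i \<in> carr L (ks ! i) \<and> ss ! i \<in> carr L (ks ! i)) \<longrightarrow>
      le_s L (sum_list ks)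
        (big_inf L (sum_list ks) (map (\<lambda>i. msubst L (sum_list ks) (part_cyl ks i) (rs ! i)) [0..<length ks]))
        (big_sup L (sum_list ks) (map (\<lambda>i. msubst L (sum_list ks) (part_cyl ks i) (ss ! i)) [0..<length ks]))
      \<longrightarrow> (\<exists>i<length ks. le_s L (ks ! i) (rs ! i) (ss ! i)))"

definition ax1 :: "'a msalg \<Rightarrow> bool" where
  "ax1 L \<longleftrightarrow> (\<forall>n. \<forall>x\<in>carr L n. \<forall>y\<in>carr L n. \<forall>z\<in>carr L n.
      sup_s L n (sup_s L n x y) z = sup_s L n x (sup_s L n y z) \<and>
      inf_s L n (inf_s L n x y) z = inf_s L n x (inf_s L n y z) \<and>
      sup_s L n x y = sup_s L n y x \<and>
      inf_s L n x y = inf_s L n y x \<and>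
      sup_s L n x (inf_s L n x y) = x \<and>
      inf_s L n x (sup_s L n x y) = x \<and>
      inf_s L n x (sup_s L n y z) = sup_s L n (inf_s L n x y) (inf_s L n x z) \<and>
      sup_s L n x (bot_s L n) = x \<and>
      inf_s L n x (top_s L n) = x)"

definition ax2 :: "'a msalg \<Rightarrow> bool" where
  "ax2 L \<longleftrightarrow> (\<forall>n k \<alpha>. subst_sym n k \<alpha> \<longrightarrow>
      msubst L k \<alpha> (bot_s L n) = bot_s L k \<and>
      msubst L k \<alpha> (top_s L n) = top_s L k \<and>
      (\<forall>x\<in>carr L n. \<forall>y\<in>carr L n.
         msubst L k \<alpha> (sup_s L n x y) = sup_s L k (msubst L k \<alpha> x) (msubst L k \<alpha> y) \<and>
         msubst L k \<alpha> (inf_s L n x y) = inf_s L k (msubst L k \<alpha> x) (msubst L k \<alpha> y)))"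

text \<open>alpha : k -> n, beta : n -> m; the composite beta o alpha is map (nth beta) alpha\<close>
definition ax3 :: "'a msalg \<Rightarrow> bool" where
  "ax3 L \<longleftrightarrow> (\<forall>k n m \<alpha> \<beta>. subst_sym k n \<alpha> \<and> subst_sym n m \<beta> \<longrightarrow>
      (\<forall>r\<in>carr L k. msubst L m (map (nth \<beta>) \<alpha>) r = msubst L m \<beta> (msubst L n \<alpha> r)))"

definition ax4 :: "'a msalg \<Rightarrow> bool" where
  "ax4 L \<longleftrightarrow> (\<forall>n. \<forall>r\<in>carr L n. msubst L n [0..<n] r = r)"

definition ax5 :: "'a msalg \<Rightarrow> bool" where
  "ax5 L \<longleftrightarrow> (\<forall>n k \<alpha>. subst_sym n k \<alpha> \<longrightarrow>
      (\<forall>r\<in>carr L n. msubst L k \<alpha> (neg_s L n r) = neg_s L k (msubst L k \<alpha> r)))"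

definition ax6 :: "'a msalg \<Rightarrow> bool" where
  "ax6 L \<longleftrightarrow> (\<forall>n. \<forall>r\<in>carr L n.
      sup_s L n r (neg_s L n r) = top_s L n \<and> inf_s L n r (neg_s L n r) = bot_s L n)"

definition ax7 :: "'a msalg \<Rightarrow> bool" where
  "ax7 L \<longleftrightarrow> (\<forall>n. ex_s L n (bot_s L (Suc n)) = bot_s L n \<and>
      (\<forall>r\<in>carr L (Suc n). \<forall>s\<in>carr L (Suc n).
         ex_s L n (sup_s L (Suc n) r s) = sup_s L n (ex_s L n r) (ex_s L n s)))"

definition ax8 :: "'a msalg \<Rightarrow> bool" where
  "ax8 L \<longleftrightarrow> (\<forall>n. \<forall>r\<in>carr L (Suc n).
      le_s L (Suc n) r (msubst L (Suc n) (cyl n) (ex_s L n r)))"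

definition ax9 :: "'a msalg \<Rightarrow> bool" where
  "ax9 L \<longleftrightarrow> (\<forall>n. \<forall>r\<in>carr L (Suc n). \<forall>s\<in>carr L n.
      ex_s L n (inf_s L (Suc n) r (msubst L (Suc n) (cyl n) s)) = inf_s L n (ex_s L n r) s)"

text \<open>alphas ! i : k_i -> m (k_i = length (alphas ! i)), i < n;
  beta_i = alpha_i extended by k_i |-> m + i (0-based).\<close>
definition ax10 :: "'a msalg \<Rightarrow> bool" where
  "ax10 L \<longleftrightarrow> (\<forall>m (alphas :: nat list list) rs.
      length rs = length alphas \<and>
      (\<forall>i<length alphas. (\<forall>j\<in>set (alphas ! i). j < m) \<and>
                          rs ! i \<in> carr L (Suc (length (alphas ! i)))) \<longrightarrow>
      ex_iter L m (length alphas)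
        (big_inf L (m + length alphas)
           (map (\<lambda>i. msubst L (m + length alphas) (alphas ! i @ [m + i]) (rs ! i)) [0..<length alphas]))
      = big_inf L m
           (map (\<lambda>i. msubst L m (alphas ! i) (ex_s L (length (alphas ! i)) (rs ! i))) [0..<length alphas]))"

definition satisfies_axioms :: "'a msalg \<Rightarrow> bool" where
  "satisfies_axioms L \<longleftrightarrow> ax0 L \<and> ax1 L \<and> ax2 L \<and> ax3 L \<and> ax4 L \<and> ax5 L \<and>
     ax6 L \<and> ax7 L \<and> ax8 L \<and> ax9 L \<and> ax10 L"

definition tuples :: "'w set \<Rightarrow> nat \<Rightarrow> 'w list set" where
  "tuples W n = {xs. length xs = n \<and> set xs \<subseteq> W}"

definition fo_alg :: "'w set \<Rightarrow> 'w list set msalg" where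
  "fo_alg W = \<lparr> carr = (\<lambda>n. Pow (tuples W n)),
     msubst = (\<lambda>k \<alpha> r. {xs \<in> tuples W k. map (nth xs) \<alpha> \<in> r}),
     bot_s = (\<lambda>n. {}),
     top_s = (\<lambda>n. tuples W n),
     sup_s = (\<lambda>n r s. r \<union> s),
     inf_s = (\<lambda>n r s. r \<inter> s),
     neg_s = (\<lambda>n r. tuples W n - r),
     ex_s = (\<lambda>n r. {xs \<in> tuples W n. \<exists>y\<in>W. xs @ [y] \<in> r}) \<rparr>"

definition subalgebra :: "(nat \<Rightarrow> 'b set) \<Rightarrow> 'b msalg \<Rightarrow> bool" where
  "subalgebra S M \<longleftrightarrow> (\<forall>n. S n \<subseteq> carr M n) \<and>
     (\<forall>n. bot_s M n \<in> S n \<and> top_s M n \<in> S n) \<and>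
     (\<forall>n. \<forall>x\<in>S n. \<forall>y\<in>S n. sup_s M n x y \<in> S n \<and> inf_s M n x y \<in> S n) \<and>
     (\<forall>n. \<forall>x\<in>S n. neg_s M n x \<in> S n) \<and>
     (\<forall>n. \<forall>x\<in>S (Suc n). ex_s M n x \<in> S n) \<and>
     (\<forall>n k \<alpha>. subst_sym n k \<alpha> \<longrightarrow> (\<forall>x\<in>S n. msubst M k \<alpha> x \<in> S k))"

definition is_hom :: "(nat \<Rightarrow> 'a \<Rightarrow> 'b) \<Rightarrow> 'a msalg \<Rightarrow> 'b msalg \<Rightarrow> bool" where
  "is_hom h L M \<longleftrightarrow>
     (\<forall>n. h n (bot_s L n) = bot_s M n \<and> h n (top_s L n) = top_s M n) \<and>
     (\<forall>n. \<forall>x\<in>carr L n. \<forall>y\<in>carr L n.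
        h n (sup_s L n x y) = sup_s M n (h n x) (h n y) \<and>
        h n (inf_s L n x y) = inf_s M n (h n x) (h n y)) \<and>
     (\<forall>n. \<forall>x\<in>carr L n. h n (neg_s L n x) = neg_s M n (h n x)) \<and>
     (\<forall>n. \<forall>x\<in>carr L (Suc n). h n (ex_s L n x) = ex_s M n (h (Suc n) x)) \<and>
     (\<forall>n k \<alpha>. subst_sym n k \<alpha> \<longrightarrow>
        (\<forall>x\<in>carr L n. h k (msubst L k \<alpha> x) = msubst M k \<alpha> (h n x)))"

definition is_iso :: "'a msalg \<Rightarrow> 'b msalg \<Rightarrow> bool" where
  "is_iso L M \<longleftrightarrow> (\<exists>h. (\<forall>n. bij_betw (h n) (carr L n) (carr M n)) \<and> is_hom h L M)"

definition iso_to_subalg_of_fo :: "'a msalg \<Rightarrow> 'w set \<Rightarrow> bool" where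
  "iso_to_subalg_of_fo L W \<longleftrightarrow>
     (\<exists>S. subalgebra S (fo_alg W) \<and> is_iso L ((fo_alg W)\<lparr>carr := S\<rparr>))"

end

theory Submission
  imports Defs
begin

locale ba =
  fixes B :: "'a set" and mt :: "'a \<Rightarrow> 'a \<Rightarrow> 'a" and jn :: "'a \<Rightarrow> 'a \<Rightarrow> 'a"
    and ng :: "'a \<Rightarrow> 'a" and z :: 'a and u :: 'a
  assumes zB: "z \<in> B" and uB: "u \<in> B"
    and mtB: "x \<in> B \<Longrightarrow> y \<in> B \<Longrightarrow> mt x y \<in> B"
    and jnB: "x \<in> B \<Longrightarrow> y \<in> B \<Longrightarrow> jn x y \<in> B"
    and ngB: "x \<in> B \<Longrightarrow> ng x \<in> B"
    and jn_assoc: "x \<in> B \<Longrightarrow> y \<in> B \<Longrightarrow> w \<in> B \<Longrightarrow> jn (jn x y) w = jn x (jn y w)"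
    and mt_assoc: "x \<in> B \<Longrightarrow> y \<in> B \<Longrightarrow> w \<in> B \<Longrightarrow> mt (mt x y) w = mt x (mt y w)"
    and jn_comm: "x \<in> B \<Longrightarrow> y \<in> B \<Longrightarrow> jn x y = jn y x"
    and mt_comm: "x \<in> B \<Longrightarrow> y \<in> B \<Longrightarrow> mt x y = mt y x"
    and absorb1: "x \<in> B \<Longrightarrow> y \<in> B \<Longrightarrow> jn x (mt x y) = x"
    and absorb2: "x \<in> B \<Longrightarrow> y \<in> B \<Longrightarrow> mt x (jn x y) = x"
    and distr: "x \<in> B \<Longrightarrow> y \<in> B \<Longrightarrow> w \<in> B \<Longrightarrow> mt x (jn y w) = jn (mt x y) (mt x w)"
    and jn_z: "x \<in> B \<Longrightarrow> jn x z = x"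
    and mt_u: "x \<in> B \<Longrightarrow> mt x u = x"
    and compl1: "x \<in> B \<Longrightarrow> jn x (ng x) = u"
    and compl2: "x \<in> B \<Longrightarrow> mt x (ng x) = z"
begin

lemma mt_idem: "x \<in> B \<Longrightarrow> mt x x = x"
  by (metis absorb2 jn_z zB)

lemma jn_idem: "x \<in> B \<Longrightarrow> jn x x = x"
  by (metis absorb1 mt_u uB)

lemma z_mt: "x \<in> B \<Longrightarrow> mt z x = z"
  by (metis absorb2 jn_comm jn_z zB)

lemma mt_z: "x \<in> B \<Longrightarrow> mt x z = z"
  by (metis mt_comm z_mt zB)

lemma z_jn: "x \<in> B \<Longrightarrow> jn z x = x"
  by (metis jn_comm jn_z zB)

lemma u_mt: "x \<in> B \<Longrightarrow> mt u x = x"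
  by (metis mt_comm mt_u uB)

lemma split_compl: "x \<in> B \<Longrightarrow> a \<in> B \<Longrightarrow> x = jn (mt x a) (mt x (ng a))"
  by (metis compl1 distr mt_u ngB)

lemma zero_cases: "x \<in> B \<Longrightarrow> a \<in> B \<Longrightarrow> mt x a = z \<Longrightarrow> mt x (ng a) = z \<Longrightarrow> x = z"
  by (metis split_compl jn_z zB)

definition le where "le x y \<longleftrightarrow> x = mt x y"

lemma le_refl: "x \<in> B \<Longrightarrow> le x x"
  by (simp add: le_def mt_idem)

lemma le_trans: "x \<in> B \<Longrightarrow> y \<in> B \<Longrightarrow> w \<in> B \<Longrightarrow> le x y \<Longrightarrow> le y w \<Longrightarrow> le x w"
  unfolding le_def by (metis mt_assoc)

lemma le_antisym: "x \<in> B \<Longrightarrow> y \<in> B \<Longrightarrow> le x y \<Longrightarrow> le y x \<Longrightarrow> x = y"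
  unfolding le_def by (metis mt_comm)

lemma le_mt_iff: "x \<in> B \<Longrightarrow> y \<in> B \<Longrightarrow> w \<in> B \<Longrightarrow> le x (mt y w) \<longleftrightarrow> le x y \<and> le x w"
  unfolding le_def by (metis mt_assoc mt_comm mt_idem mtB)

lemma le_mt1: "x \<in> B \<Longrightarrow> y \<in> B \<Longrightarrow> le (mt x y) x"
  using le_mt_iff le_refl mtB by blast

lemma le_mt2: "x \<in> B \<Longrightarrow> y \<in> B \<Longrightarrow> le (mt x y) y"
  using le_mt_iff le_refl mtB by blast

lemma le_u: "x \<in> B \<Longrightarrow> le x u"
  by (simp add: le_def mt_u)

lemma z_le: "x \<in> B \<Longrightarrow> le z x"
  by (simp add: le_def z_mt)

lemma le_z: "x \<in> B \<Longrightarrow> le x z \<Longrightarrow> x = z"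
  by (simp add: le_def mt_z)

lemma nonzero_mono: "x \<in> B \<Longrightarrow> y \<in> B \<Longrightarrow> le x y \<Longrightarrow> x \<noteq> z \<Longrightarrow> y \<noteq> z"
  using le_z by blast

lemma le_jn1: "x \<in> B \<Longrightarrow> y \<in> B \<Longrightarrow> le x (jn x y)"
  by (simp add: absorb2 le_def)

lemma le_jn2: "x \<in> B \<Longrightarrow> y \<in> B \<Longrightarrow> le y (jn x y)"
  by (metis jn_comm le_jn1)

lemma le_compl_z: "x \<in> B \<Longrightarrow> a \<in> B \<Longrightarrow> le x a \<Longrightarrow> mt x (ng a) = z"
  unfolding le_def by (metis compl2 mt_assoc mt_z ngB)

lemma compl_z_le: "x \<in> B \<Longrightarrow> a \<in> B \<Longrightarrow> mt x (ng a) = z \<Longrightarrow> le x a"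
  unfolding le_def by (metis split_compl jn_z mtB)

lemma neq_cases: "x \<in> B \<Longrightarrow> y \<in> B \<Longrightarrow> x \<noteq> y \<Longrightarrow> mt x (ng y) \<noteq> z \<or> mt y (ng x) \<noteq> z"
  using compl_z_le le_antisym by blast

lemma mt_mono: "x \<in> B \<Longrightarrow> y \<in> B \<Longrightarrow> w \<in> B \<Longrightarrow> le x y \<Longrightarrow> le (mt x w) (mt y w)"
  by (meson le_mt1 le_mt2 le_mt_iff le_trans mtB)

lemma jn_le: "x \<in> B \<Longrightarrow> y \<in> B \<Longrightarrow> w \<in> B \<Longrightarrow> le x w \<Longrightarrow> le y w \<Longrightarrow> le (jn x y) w"
  unfolding le_def by (metis distr jnB mt_comm)

lemma jn_compl_u: "a \<in> B \<Longrightarrow> jn (ng a) a = u"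
  by (metis compl1 jn_comm ngB)

end

locale fol =
  fixes L :: "'a msalg"
  assumes msalg: "is_msalg L" and axs: "satisfies_axioms L"
begin

lemma A0: "ax0 L" and A1: "ax1 L" and A2: "ax2 L" and A3: "ax3 L" and A4: "ax4 L"
  and A5: "ax5 L" and A6: "ax6 L" and A7: "ax7 L" and A8: "ax8 L" and A9: "ax9 L" and A10: "ax10 L"
  using axs by (auto simp: satisfies_axioms_def)

lemma bot_C[simp]: "bot_s L n \<in> carr L n" and top_C[simp]: "top_s L n \<in> carr L n"
  using msalg by (auto simp: is_msalg_def)
lemma inf_C[simp]: "x \<in> carr L n \<Longrightarrow> y \<in> carr L n \<Longrightarrow> inf_s L n x y \<in> carr L n"
  and sup_C[simp]: "x \<in> carr L n \<Longrightarrow> y \<in> carr L n \<Longrightarrow> sup_s L n x y \<in> carr L n"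
  and neg_C[simp]: "x \<in> carr L n \<Longrightarrow> neg_s L n x \<in> carr L n"
  and ex_C[simp]: "x \<in> carr L (Suc n) \<Longrightarrow> ex_s L n x \<in> carr L n"
  using msalg by (auto simp: is_msalg_def)
lemma subst_C[simp]: "subst_sym n k \<alpha> \<Longrightarrow> x \<in> carr L n \<Longrightarrow> msubst L k \<alpha> x \<in> carr L k"
  using msalg by (auto simp: is_msalg_def)

lemmas A1I = A1[unfolded ax1_def, rule_format]
lemmas a1_1 = A1I[THEN conjunct1]
lemmas a1_2 = A1I[THEN conjunct2, THEN conjunct1]
lemmas a1_3 = A1I[THEN conjunct2, THEN conjunct2, THEN conjunct1]
lemmas a1_4 = A1I[THEN conjunct2, THEN conjunct2, THEN conjunct2, THEN conjunct1]
lemmas a1_5 = A1I[THEN conjunct2, THEN conjunct2, THEN conjunct2, THEN conjunct2, THEN conjunct1]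
lemmas a1_6 = A1I[THEN conjunct2, THEN conjunct2, THEN conjunct2, THEN conjunct2, THEN conjunct2, THEN conjunct1]
lemmas a1_7 = A1I[THEN conjunct2, THEN conjunct2, THEN conjunct2, THEN conjunct2, THEN conjunct2, THEN conjunct2, THEN conjunct1]
lemmas a1_8 = A1I[THEN conjunct2, THEN conjunct2, THEN conjunct2, THEN conjunct2, THEN conjunct2, THEN conjunct2, THEN conjunct2, THEN conjunct1]
lemmas a1_9 = A1I[THEN conjunct2, THEN conjunct2, THEN conjunct2, THEN conjunct2, THEN conjunct2, THEN conjunct2, THEN conjunct2, THEN conjunct2]
lemmas A6I = A6[unfolded ax6_def, rule_format]

lemma ba_L: "ba (carr L n) (inf_s L n) (sup_s L n) (neg_s L n) (bot_s L n) (top_s L n)"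
  apply unfold_locales
  apply (simp_all only: bot_C top_C inf_C sup_C neg_C)
  apply (rule a1_1; assumption)
  apply (rule a1_2; assumption)
  apply (rule a1_3; assumption)
  apply (rule a1_4; assumption)
  apply (rule a1_5; assumption)
  apply (rule a1_6; assumption)
  apply (rule a1_7; assumption)
  apply (rule a1_8; assumption)
  apply (rule a1_9; assumption)
  apply (rule A6I[THEN conjunct1]; assumption)
  apply (rule A6I[THEN conjunct2]; assumption)
  done

lemma le_s_ba: "le_s L n = ba.le (inf_s L n)"
  by (intro ext) (simp add: ba.le_def[OF ba_L] le_s_def)

lemmas BA = ba.mt_idem[OF ba_L] ba.jn_idem[OF ba_L] ba.z_mt[OF ba_L] ba.mt_z[OF ba_L]
  ba.z_jn[OF ba_L] ba.u_mt[OF ba_L] ba.zero_cases[OF ba_L] ba.le_refl[OF ba_L] ba.le_trans[OF ba_L]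
  ba.le_antisym[OF ba_L] ba.le_mt_iff[OF ba_L] ba.le_mt1[OF ba_L] ba.le_mt2[OF ba_L] ba.le_u[OF ba_L]
  ba.z_le[OF ba_L] ba.le_z[OF ba_L] ba.nonzero_mono[OF ba_L] ba.le_jn1[OF ba_L] ba.le_jn2[OF ba_L]
  ba.le_compl_z[OF ba_L] ba.compl_z_le[OF ba_L] ba.neq_cases[OF ba_L] ba.mt_mono[OF ba_L]
  ba.jn_le[OF ba_L] ba.jn_compl_u[OF ba_L] ba.mt_u[OF ba_L] ba.jn_z[OF ba_L] ba.compl1[OF ba_L]
  ba.compl2[OF ba_L] ba.mt_comm[OF ba_L] ba.jn_comm[OF ba_L] ba.mt_assoc[OF ba_L] ba.jn_assoc[OF ba_L]
  ba.distr[OF ba_L]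

lemmas BAle = BA[folded le_s_ba]

lemma s_bot[simp]: "subst_sym n k \<alpha> \<Longrightarrow> msubst L k \<alpha> (bot_s L n) = bot_s L k"
  and s_top[simp]: "subst_sym n k \<alpha> \<Longrightarrow> msubst L k \<alpha> (top_s L n) = top_s L k"
  using A2 by (auto simp: ax2_def)
lemma s_inf: "subst_sym n k \<alpha> \<Longrightarrow> x \<in> carr L n \<Longrightarrow> y \<in> carr L n \<Longrightarrow>
    msubst L k \<alpha> (inf_s L n x y) = inf_s L k (msubst L k \<alpha> x) (msubst L k \<alpha> y)"
  and s_sup: "subst_sym n k \<alpha> \<Longrightarrow> x \<in> carr L n \<Longrightarrow> y \<in> carr L n \<Longrightarrow>
    msubst L k \<alpha> (sup_s L n x y) = sup_s L k (msubst L k \<alpha> x) (msubst L k \<alpha> y)"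
  using A2 unfolding ax2_def by blast+
lemma s_neg: "subst_sym n k \<alpha> \<Longrightarrow> x \<in> carr L n \<Longrightarrow>
    msubst L k \<alpha> (neg_s L n x) = neg_s L k (msubst L k \<alpha> x)"
  using A5 unfolding ax5_def by blast
lemma s_comp: "subst_sym k n \<alpha> \<Longrightarrow> subst_sym n m \<beta> \<Longrightarrow> r \<in> carr L k \<Longrightarrow>
    msubst L m (map (nth \<beta>) \<alpha>) r = msubst L m \<beta> (msubst L n \<alpha> r)"
  using A3 unfolding ax3_def by blast
lemma s_id: "r \<in> carr L n \<Longrightarrow> msubst L n [0..<n] r = r"
  using A4 unfolding ax4_def by blast

lemma s_le: "subst_sym n k \<alpha> \<Longrightarrow> x \<in> carr L n \<Longrightarrow> y \<in> carr L n \<Longrightarrow> le_s L n x y \<Longrightarrow>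
   le_s L k (msubst L k \<alpha> x) (msubst L k \<alpha> y)"
  unfolding le_s_def by (metis s_inf)

lemma bi_C[simp]: "set xs \<subseteq> carr L n \<Longrightarrow> big_inf L n xs \<in> carr L n"
  by (induction xs) (auto simp: big_inf_def)

lemma bi_cons: "big_inf L n (x # xs) = inf_s L n x (big_inf L n xs)"
  by (simp add: big_inf_def)

lemma bi_nil: "big_inf L n [] = top_s L n"
  by (simp add: big_inf_def)

lemma bi_single: "x \<in> carr L n \<Longrightarrow> big_inf L n [x] = x"
  by (simp add: big_inf_def BA(26))

lemma bi_lower: "set xs \<subseteq> carr L n \<Longrightarrow> x \<in> set xs \<Longrightarrow> le_s L n (big_inf L n xs) x"
proof (induction xs)
  case (Cons a xs)
  then show ?case
    by (auto simp: bi_cons intro: BAle(12) BAle(9)[OF _ _ _ BAle(13)])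
qed simp

lemma bi_glb: "set xs \<subseteq> carr L n \<Longrightarrow> y \<in> carr L n \<Longrightarrow> (\<forall>x\<in>set xs. le_s L n y x) \<Longrightarrow>
   le_s L n y (big_inf L n xs)"
proof (induction xs)
  case Nil
  then show ?case by (simp add: bi_nil BAle)
next
  case (Cons a xs)
  then show ?case by (auto simp: bi_cons BAle(11))
qed

lemma bi_subst: "subst_sym n k \<alpha> \<Longrightarrow> set xs \<subseteq> carr L n \<Longrightarrow>
   msubst L k \<alpha> (big_inf L n xs) = big_inf L k (map (msubst L k \<alpha>) xs)"
  by (induction xs) (auto simp: bi_cons bi_nil s_inf)

lemma bi_mono: "set xs \<subseteq> carr L n \<Longrightarrow> set ys \<subseteq> carr L n \<Longrightarrow> set ys \<subseteq> set xs \<Longrightarrow>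
   le_s L n (big_inf L n xs) (big_inf L n ys)"
  by (meson bi_C bi_glb bi_lower subsetD)

lemma bi_append: "set xs \<subseteq> carr L n \<Longrightarrow> set ys \<subseteq> carr L n \<Longrightarrow>
   big_inf L n (xs @ ys) = inf_s L n (big_inf L n xs) (big_inf L n ys)"
  by (induction xs) (auto simp: bi_cons bi_nil BA(6) BA(32))

end

fun idx :: "'v list \<Rightarrow> 'v \<Rightarrow> nat" where
  "idx [] x = 0"
| "idx (y # ys) x = (if x = y then 0 else Suc (idx ys x))"

lemma idx_lt: "x \<in> set u \<Longrightarrow> idx u x < length u"
  by (induction u) auto

lemma nth_idx: "x \<in> set u \<Longrightarrow> u ! idx u x = x"
  by (induction u) auto

lemma idx_nth: "distinct u \<Longrightarrow> i < length u \<Longrightarrow> idx u (u ! i) = i"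
proof (induction u arbitrary: i)
  case (Cons a u)
  then show ?case by (cases i) (auto)
qed simp

lemma idx_append: "x \<in> set u \<Longrightarrow> idx (u @ v) x = idx u x"
  by (induction u) auto

lemma idx_inj: "x \<in> set u \<Longrightarrow> y \<in> set u \<Longrightarrow> idx u x = idx u y \<Longrightarrow> x = y"
  by (metis nth_idx)

lemma map_idx_self: "distinct u \<Longrightarrow> map (idx u) u = [0..<length u]"
  by (rule nth_equalityI) (auto simp: idx_nth)

definition vars :: "('v list \<times> 'a) list \<Rightarrow> 'v set" where
  "vars X = (\<Union>p\<in>set X. set (fst p))"

lemma vars_simps[simp]: "vars [] = {}" "vars (p # X) = set (fst p) \<union> vars X"
  "vars (X @ Y) = vars X \<union> vars Y"
  by (auto simp: vars_def)

definition wfp :: "'a msalg \<Rightarrow> ('v list \<times> 'a) \<Rightarrow> bool" where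
  "wfp L p \<longleftrightarrow> snd p \<in> carr L (length (fst p))"

definition Jf :: "'a msalg \<Rightarrow> 'v list \<Rightarrow> ('v list \<times> 'a) list \<Rightarrow> 'a" where
  "Jf L u X = big_inf L (length u) (map (\<lambda>p. msubst L (length u) (map (idx u) (fst p)) (snd p)) X)"

definition cons :: "'a msalg \<Rightarrow> ('v list \<times> 'a) list \<Rightarrow> bool" where
  "cons L X \<longleftrightarrow> (let u = remdups (concat (map fst X)) in Jf L u X \<noteq> bot_s L (length u))"

lemma set_remdups_vars: "set (remdups (concat (map fst X))) = vars X"
  by (auto simp: vars_def)

lemma subst_sym_idx: "set v \<subseteq> set u \<Longrightarrow> subst_sym (length v) (length u) (map (idx u) v)"
  by (auto simp: subst_sym_def idx_lt)

context fol
begin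

lemma Jf_C: "\<forall>p\<in>set X. wfp L p \<Longrightarrow> vars X \<subseteq> set u \<Longrightarrow> Jf L u X \<in> carr L (length u)"
  unfolding Jf_def
  by (rule bi_C) (auto simp: wfp_def vars_def intro!: subst_C subst_sym_idx)

lemma Jf_nil: "Jf L u [] = top_s L (length u)"
  by (simp add: Jf_def bi_nil)

lemma Jf_Cons: "Jf L u (p # X) = inf_s L (length u) (msubst L (length u) (map (idx u) (fst p)) (snd p)) (Jf L u X)"
  by (simp add: Jf_def bi_cons)

lemma Jf_append: "\<forall>p\<in>set (X @ Y). wfp L p \<Longrightarrow> vars (X @ Y) \<subseteq> set u \<Longrightarrow>
  Jf L u (X @ Y) = inf_s L (length u) (Jf L u X) (Jf L u Y)"
  unfolding Jf_def map_append
  by (rule bi_append) (auto simp: wfp_def vars_def intro!: subst_C subst_sym_idx)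

lemma Jf_mono: "\<forall>p\<in>set X. wfp L p \<Longrightarrow> vars X \<subseteq> set u \<Longrightarrow> set Y \<subseteq> set X \<Longrightarrow>
  le_s L (length u) (Jf L u X) (Jf L u Y)"
  unfolding Jf_def
  by (rule bi_mono) (auto simp: wfp_def vars_def intro!: subst_C subst_sym_idx)

lemma Jf_lower: "\<forall>p\<in>set X. wfp L p \<Longrightarrow> vars X \<subseteq> set u \<Longrightarrow> p \<in> set X \<Longrightarrow>
  le_s L (length u) (Jf L u X) (msubst L (length u) (map (idx u) (fst p)) (snd p))"
  unfolding Jf_def
  by (rule bi_lower) (auto simp: wfp_def vars_def intro!: subst_C subst_sym_idx)

lemma Jf_trans:
  assumes wf: "\<forall>p\<in>set X. wfp L p" and v0: "vars X \<subseteq> set u0" and g: "subst_sym (length u0) (length u) \<gamma>"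
    and gi: "\<forall>x\<in>vars X. \<gamma> ! idx u0 x = idx u x"
  shows "msubst L (length u) \<gamma> (Jf L u0 X) = Jf L u X"
proof -
  have "msubst L (length u) \<gamma> (Jf L u0 X) =
     big_inf L (length u) (map (msubst L (length u) \<gamma>) (map (\<lambda>p. msubst L (length u0) (map (idx u0) (fst p)) (snd p)) X))"
    unfolding Jf_def
    by (rule bi_subst[OF g]) (use wf v0 in \<open>auto simp: wfp_def vars_def intro!: subst_C subst_sym_idx\<close>)
  also have "\<dots> = Jf L u X"
    unfolding Jf_def map_map o_def
  proof (rule arg_cong[where f="big_inf L (length u)"], rule map_cong[OF refl])
    fix p assume p: "p \<in> set X"
    have sv: "set (fst p) \<subseteq> set u0" using p v0 by (auto simp: vars_def)
    have eq: "map (nth \<gamma>) (map (idx u0) (fst p)) = map (idx u) (fst p)"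
      using gi p by (auto simp: vars_def)
    have "msubst L (length u) (map (nth \<gamma>) (map (idx u0) (fst p))) (snd p) =
        msubst L (length u) \<gamma> (msubst L (length u0) (map (idx u0) (fst p)) (snd p))"
      by (rule s_comp[OF _ g]) (use sv wf p in \<open>auto simp: wfp_def subst_sym_idx\<close>)
    then show "msubst L (length u) \<gamma> (msubst L (length u0) (map (idx u0) (fst p)) (snd p)) =
          msubst L (length u) (map (idx u) (fst p)) (snd p)"
      by (simp only: eq)
  qed
  finally show ?thesis .
qed

end

lemma ex_iter_Suc': "ex_iter L m (Suc n) r = ex_iter L m n (ex_s L (m + n) r)"
  by simp

lemma subst_sym_cyl: "subst_sym n (Suc n) (cyl n)"
  by (auto simp: subst_sym_def cyl_def)

context fol
begin

lemma le_refl': "x \<in> carr L n \<Longrightarrow> le_s L n x x" by (rule BAle(8))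

lemma two_valued: assumes x: "x \<in> carr L 0" shows "x = bot_s L 0 \<or> x = top_s L 0"
proof -
  have sid: "\<And>r. r \<in> carr L 0 \<Longrightarrow> msubst L 0 [] r = r" using s_id[of _ 0] by simp
  have pc: "part_cyl [0,0] 0 = []" "part_cyl [0,0] (Suc 0) = []" by (simp_all add: part_cyl_def)
  have u2: "[0..<2] = [0,1::nat]" by (simp add: upt_rec)
  have nx: "neg_s L 0 x \<in> carr L 0" using x by simp
  have "le_s L 0 (big_inf L 0 [top_s L 0, top_s L 0]) (big_sup L 0 [x, neg_s L 0 x])"
  proof -
    have "big_sup L 0 [x, neg_s L 0 x] = top_s L 0"
      using x by (simp add: big_sup_def BA(27) ba.compl1[OF ba_L])
    then show ?thesis using BAle(8)[of "top_s L 0" 0] by (simp add: big_inf_def BA(1))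
  qed
  then have "\<exists>i<length [0,0::nat]. le_s L ([0,0] ! i) ([top_s L 0, top_s L 0] ! i) ([x, neg_s L 0 x] ! i)"
    using A0[unfolded ax0_def, rule_format, of "[top_s L 0, top_s L 0]" "[0,0]" "[x, neg_s L 0 x]"] x nx
    by (simp add: pc u2 sid less_Suc_eq nth_Cons')
  then have "le_s L 0 (top_s L 0) x \<or> le_s L 0 (top_s L 0) (neg_s L 0 x)"
    by (auto simp: less_Suc_eq)
  then show ?thesis
  proof
    assume "le_s L 0 (top_s L 0) x" then show ?thesis using x by (simp add: le_s_def BA(6))
  next
    assume "le_s L 0 (top_s L 0) (neg_s L 0 x)"
    then have "neg_s L 0 x = top_s L 0" using nx by (simp add: le_s_def BA(6))
    then have "x = inf_s L 0 x (neg_s L 0 x)" using x by (simp add: BA(26))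
    then show ?thesis using x by (simp add: BA(29))
  qed
qed

lemma top_ne_bot0: "top_s L 0 \<noteq> bot_s L 0"
proof
  assume eq: "top_s L 0 = bot_s L 0"
  have "le_s L 0 (big_inf L 0 []) (big_sup L 0 [])"
    using eq BAle(8)[of "top_s L 0" 0] by (simp add: big_inf_def big_sup_def)
  then show False
    using A0[unfolded ax0_def, rule_format, of "[]" "[]" "[]"] by (simp add: part_cyl_def)
qed

lemma ex_bot[simp]: "ex_s L n (bot_s L (Suc n)) = bot_s L n"
  using A7 by (simp add: ax7_def)

lemma ex_sup: "r \<in> carr L (Suc n) \<Longrightarrow> s \<in> carr L (Suc n) \<Longrightarrow>
   ex_s L n (sup_s L (Suc n) r s) = sup_s L n (ex_s L n r) (ex_s L n s)"
  using A7 by (simp add: ax7_def)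

lemma ex_le: "r \<in> carr L (Suc n) \<Longrightarrow> le_s L (Suc n) r (msubst L (Suc n) (cyl n) (ex_s L n r))"
  using A8 by (simp add: ax8_def)

lemma ex_inf: "r \<in> carr L (Suc n) \<Longrightarrow> s \<in> carr L n \<Longrightarrow>
   ex_s L n (inf_s L (Suc n) r (msubst L (Suc n) (cyl n) s)) = inf_s L n (ex_s L n r) s"
  using A9 by (simp add: ax9_def)

lemma ex_nz: assumes x: "x \<in> carr L (Suc n)" and nz: "x \<noteq> bot_s L (Suc n)"
  shows "ex_s L n x \<noteq> bot_s L n"
proof
  assume "ex_s L n x = bot_s L n"
  then have "le_s L (Suc n) x (bot_s L (Suc n))"
    using ex_le[OF x] s_bot[OF subst_sym_cyl] by simp
  then show False using nz x BAle(16) by blast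
qed

lemma ax10_single:
  assumes a: "set \<alpha> \<subseteq> {..<m}" and r: "r \<in> carr L (Suc (length \<alpha>))"
  shows "ex_s L m (msubst L (Suc m) (\<alpha> @ [m]) r) = msubst L m \<alpha> (ex_s L (length \<alpha>) r)"
proof -
  have s1: "subst_sym (Suc (length \<alpha>)) (Suc m) (\<alpha> @ [m])" using a by (auto simp: subst_sym_def)
  have s2: "subst_sym (length \<alpha>) m \<alpha>" using a by (auto simp: subst_sym_def)
  have "ex_iter L m (length [\<alpha>]) (big_inf L (m + length [\<alpha>])
           (map (\<lambda>i. msubst L (m + length [\<alpha>]) ([\<alpha>] ! i @ [m + i]) ([r] ! i)) [0..<length [\<alpha>]]))
      = big_inf L m (map (\<lambda>i. msubst L m ([\<alpha>] ! i) (ex_s L (length ([\<alpha>] ! i)) ([r] ! i))) [0..<length [\<alpha>]])"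
    using A10[unfolded ax10_def, rule_format, of "[r]" "[\<alpha>]" m] a r by auto
  then show ?thesis
    using subst_C[OF s1 r] subst_C[OF s2 ex_C[OF r]] by (simp add: bi_single)
qed

end

locale fol_ne = fol +
  assumes ne: "ex_s L 0 (top_s L 1) = top_s L 0"
begin

lemma ex_top: "ex_s L n (top_s L (Suc n)) = top_s L n"
proof -
  have "ex_s L n (msubst L (Suc n) ([] @ [n]) (top_s L 1)) = msubst L n [] (ex_s L (length []) (top_s L 1))"
    using ax10_single[of "[]" n "top_s L 1"] by simp
  moreover have "subst_sym 1 (Suc n) [n]" "subst_sym 0 n []" by (auto simp: subst_sym_def)
  ultimately show ?thesis using ne by simp
qed

lemma top_ne_bot: "top_s L n \<noteq> bot_s L n"
proof (induction n)
  case 0 then show ?case by (rule top_ne_bot0)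
next
  case (Suc n) then show ?case by (metis ex_top ex_bot)
qed

lemma subst_nz:
  assumes d: "distinct \<alpha>" and s: "subst_sym n k \<alpha>" and x: "x \<in> carr L n" and nz: "x \<noteq> bot_s L n"
  shows "msubst L k \<alpha> x \<noteq> bot_s L k"
proof (cases "n = 0")
  case True
  then have "\<alpha> = []" using s by (simp add: subst_sym_def)
  moreover have "x = top_s L 0" using two_valued[of x] x nz True by auto
  ultimately show ?thesis using s True top_ne_bot by simp
next
  case False
  define \<beta> where "\<beta> = map (\<lambda>j. if j \<in> set \<alpha> then idx \<alpha> j else 0) [0..<k]"
  have len: "length \<alpha> = n" and lt: "\<forall>j\<in>set \<alpha>. j < k" using s by (auto simp: subst_sym_def)
  have sb: "subst_sym k n \<beta>" using False len by (auto simp: subst_sym_def \<beta>_def idx_lt)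
  have "map (nth \<beta>) \<alpha> = map (idx \<alpha>) \<alpha>" using lt by (auto simp: \<beta>_def)
  also have "\<dots> = [0..<n]" using map_idx_self[OF d] len by simp
  finally have m: "map (nth \<beta>) \<alpha> = [0..<n]" .
  show ?thesis
  proof
    assume "msubst L k \<alpha> x = bot_s L k"
    then have "msubst L n \<beta> (msubst L k \<alpha> x) = bot_s L n" using sb by simp
    then have "msubst L n (map (nth \<beta>) \<alpha>) x = bot_s L n" using s_comp[OF s sb x] by simp
    then show False using m s_id[OF x] nz by simp
  qed
qed

lemma Jf_indep1:
  assumes wf: "\<forall>p\<in>set X. wfp L p" and d: "distinct u" "distinct u'" and v: "vars X \<subseteq> set u"
    and uu: "set u \<subseteq> set u'"
  shows "Jf L u' X = bot_s L (length u') \<longleftrightarrow> Jf L u X = bot_s L (length u)"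
proof -
  define \<gamma> where "\<gamma> = map (idx u') u"
  have sg: "subst_sym (length u) (length u') \<gamma>" using uu by (auto simp: subst_sym_def \<gamma>_def idx_lt)
  have dg: "distinct \<gamma>" unfolding \<gamma>_def using d uu
    by (simp add: distinct_map inj_on_def) (meson idx_inj subsetD)
  have gi: "\<forall>x\<in>vars X. \<gamma> ! idx u x = idx u' x" using v by (auto simp: \<gamma>_def idx_lt nth_idx)
  have e: "msubst L (length u') \<gamma> (Jf L u X) = Jf L u' X" by (rule Jf_trans[OF wf v sg gi])
  show ?thesis using e subst_nz[OF dg sg Jf_C[OF wf v]] sg by auto
qed

lemma cons_iff:
  assumes wf: "\<forall>p\<in>set X. wfp L p" and d: "distinct u" and v: "vars X \<subseteq> set u"
  shows "cons L X \<longleftrightarrow> Jf L u X \<noteq> bot_s L (length u)"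
  unfolding cons_def Let_def
  using Jf_indep1[OF wf distinct_remdups d, of "concat (map fst X)"] v set_remdups_vars[of X] by simp

end

datatype 'a trm = Eps 'a "'a trm list"

lemma size_sub0: "s \<in> set ts \<Longrightarrow> size s < size_list size ts + 1"
  by (induction ts) auto

lemma size_sub: "s \<in> set ts \<Longrightarrow> size s < size (Eps \<psi> ts)"
  using size_sub0 by simp

lemma map_cyl: "set \<alpha> \<subseteq> {..<N} \<Longrightarrow> map (nth (cyl N)) \<alpha> = \<alpha>"
  by (rule map_idI) (auto simp: cyl_def)

lemma map_app_cyl: "length \<alpha> = k \<Longrightarrow> map (nth (\<alpha> @ [N])) (cyl k) = \<alpha>"
  by (rule nth_equalityI) (auto simp: cyl_def nth_append)

definition hen :: "'a msalg \<Rightarrow> nat \<Rightarrow> 'a \<Rightarrow> 'a" where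
  "hen L k \<psi> = sup_s L (Suc k) (neg_s L (Suc k) (msubst L (Suc k) (cyl k) (ex_s L k \<psi>))) \<psi>"

fun hp :: "'a msalg \<Rightarrow> 'a trm \<Rightarrow> 'a trm list \<times> 'a" where
  "hp L (Eps \<psi> ts) = (ts @ [Eps \<psi> ts], hen L (length ts) \<psi>)"

fun wft :: "'a msalg \<Rightarrow> 'a trm \<Rightarrow> bool" where
  "wft L (Eps \<psi> ts) \<longleftrightarrow> \<psi> \<in> carr L (Suc (length ts))"

definition Hset :: "'a msalg \<Rightarrow> ('a trm list \<times> 'a) set" where
  "Hset L = {hp L t | t. wft L t}"

lemma hp_inj: "hp L s = hp L t \<Longrightarrow> s = t"
  by (cases s; cases t) auto

lemma idx_last: "x \<notin> set u \<Longrightarrow> idx (u @ [x]) x = length u"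
  by (induction u) auto

context fol
begin

lemma hen_C: "\<psi> \<in> carr L (Suc k) \<Longrightarrow> hen L k \<psi> \<in> carr L (Suc k)"
  by (auto simp: hen_def intro!: sup_C neg_C subst_C[OF subst_sym_cyl] ex_C)

lemma wfp_hp: "wft L t \<Longrightarrow> wfp L (hp L t)"
  by (cases t) (simp add: wfp_def hen_C)

end

context fol_ne
begin

lemma conserv:
  assumes phi: "\<phi> \<in> carr L N" and nz: "\<phi> \<noteq> bot_s L N" and psi: "\<psi> \<in> carr L (Suc k)"
    and sa: "subst_sym k N \<alpha>"
  shows "inf_s L (Suc N) (msubst L (Suc N) (cyl N) \<phi>) (msubst L (Suc N) (\<alpha> @ [N]) (hen L k \<psi>)) \<noteq> bot_s L (Suc N)"
proof -
  have len: "length \<alpha> = k" and lt: "set \<alpha> \<subseteq> {..<N}" using sa by (auto simp: subst_sym_def)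
  have sb: "subst_sym (Suc k) (Suc N) (\<alpha> @ [N])" using sa by (auto simp: subst_sym_def)
  have sc: "subst_sym N (Suc N) (cyl N)" by (rule subst_sym_cyl)
  have sck: "subst_sym k (Suc k) (cyl k)" by (rule subst_sym_cyl)
  have sa': "subst_sym k (Suc N) \<alpha>" using sa by (auto simp: subst_sym_def)
  have exC: "ex_s L k \<psi> \<in> carr L k" using psi by simp
  define a where "a = msubst L N \<alpha> (ex_s L k \<psi>)"
  define b where "b = msubst L (Suc N) (\<alpha> @ [N]) \<psi>"
  have aC: "a \<in> carr L N" unfolding a_def using sa exC by simp
  have bC: "b \<in> carr L (Suc N)" unfolding b_def using sb psi by simp
  have m1: "map (nth (\<alpha> @ [N])) (cyl k) = \<alpha>" using len by (rule map_app_cyl)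
  have m2: "map (nth (cyl N)) \<alpha> = \<alpha>" using lt by (rule map_cyl)
  have e1: "msubst L (Suc N) (\<alpha> @ [N]) (msubst L (Suc k) (cyl k) (ex_s L k \<psi>)) = msubst L (Suc N) (cyl N) a"
    using s_comp[OF sck sb exC] s_comp[OF sa sc exC] m1 m2 by (simp add: a_def)
  define h where "h = msubst L (Suc N) (\<alpha> @ [N]) (hen L k \<psi>)"
  have hsimp: "h = sup_s L (Suc N) (msubst L (Suc N) (cyl N) (neg_s L N a)) b"
    unfolding h_def hen_def b_def
    using psi exC sb sck sc aC by (simp add: s_sup s_neg e1)
  have hC: "h \<in> carr L (Suc N)" unfolding h_def using sb hen_C[OF psi] by simp
  have exb: "ex_s L N b = a" unfolding a_def b_def using ax10_single[of \<alpha> N \<psi>] lt psi len by auto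
  have exn: "ex_s L N (msubst L (Suc N) (cyl N) (neg_s L N a)) = neg_s L N a"
  proof -
    have "ex_s L N (inf_s L (Suc N) (top_s L (Suc N)) (msubst L (Suc N) (cyl N) (neg_s L N a))) =
        inf_s L N (ex_s L N (top_s L (Suc N))) (neg_s L N a)"
      using ex_inf[of "top_s L (Suc N)" N "neg_s L N a"] aC by simp
    then show ?thesis using aC sc by (simp add: ex_top BA(6))
  qed
  have exh: "ex_s L N h = top_s L N"
    using hsimp exn exb ex_sup[of "msubst L (Suc N) (cyl N) (neg_s L N a)" N b] aC bC sc
    by (simp add: BA(25))
  show ?thesis unfolding h_def[symmetric]
  proof
    assume "inf_s L (Suc N) (msubst L (Suc N) (cyl N) \<phi>) h = bot_s L (Suc N)"
    then have "inf_s L (Suc N) h (msubst L (Suc N) (cyl N) \<phi>) = bot_s L (Suc N)"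
      using hC phi sc by (simp add: BA(30))
    then have "ex_s L N (inf_s L (Suc N) h (msubst L (Suc N) (cyl N) \<phi>)) = bot_s L N" by simp
    then have "inf_s L N (top_s L N) \<phi> = bot_s L N" using ex_inf[OF hC phi] exh by simp
    then show False using nz phi by (simp add: BA(6))
  qed
qed

end

context fol_ne
begin

lemma cons_nil: "cons L []"
  by (simp add: cons_def Jf_nil top_ne_bot)

lemma hen_cons_aux: "\<forall>X. card (set X) = n \<longrightarrow> set X \<subseteq> Hset L \<longrightarrow> cons L X"
proof (induction n rule: less_induct)
  case (less n)
  show ?case
  proof (intro allI impI)
    fix X :: "('a trm list \<times> 'a) list"
    assume cn: "card (set X) = n" and XH: "set X \<subseteq> Hset L"
    show "cons L X"
    proof (cases "X = []")
      case True then show ?thesis by (simp add: cons_nil)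
    next
      case False
      define S where "S = {s. wft L s \<and> hp L s \<in> set X}"
      have fS: "finite S"
      proof -
        have "hp L ` S \<subseteq> set X" by (auto simp: S_def)
        then have "finite (hp L ` S)" using finite_subset by blast
        moreover have "inj_on (hp L) S" by (auto simp: inj_on_def intro: hp_inj)
        ultimately show ?thesis using finite_imageD by blast
      qed
      have neS: "S \<noteq> {}"
      proof -
        obtain p where "p \<in> set X" using False by (cases X) auto
        then obtain s where "p = hp L s" "wft L s" using XH by (auto simp: Hset_def)
        then have "s \<in> S" using \<open>p \<in> set X\<close> by (simp add: S_def)
        then show ?thesis by blast
      qed
      define m where "m = Max (size ` S)"
      obtain t where tS: "t \<in> S" and tm: "size t = m"
      proof -
        have "m \<in> size ` S" unfolding m_def using fS neS by (intro Max_in) auto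
        then show ?thesis using that by blast
      qed
      have tmax: "\<forall>s\<in>S. size s \<le> size t" using fS tm by (auto simp: m_def)
      obtain \<psi> ts where teq: "t = Eps \<psi> ts" by (cases t)
      have wt: "wft L t" and ht: "hp L t \<in> set X" using tS by (auto simp: S_def)
      have psi: "\<psi> \<in> carr L (Suc (length ts))" using wt teq by simp
      define X' where "X' = filter (\<lambda>p. p \<noteq> hp L t) X"
      have sX': "set X' = set X - {hp L t}" by (auto simp: X'_def)
      have lt: "card (set X') < n" unfolding sX' cn[symmetric] using ht by (intro card_Diff1_less) auto
      have X'H: "set X' \<subseteq> Hset L" using XH sX' by auto
      have consX': "cons L X'" using less.IH[OF lt] X'H by blast
      have X'form: "\<forall>p\<in>set X'. \<exists>s. p = hp L s \<and> wft L s \<and> s \<noteq> t \<and> size s \<le> size t"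
      proof
        fix p assume p: "p \<in> set X'"
        then obtain s where s: "p = hp L s" "wft L s" using X'H by (auto simp: Hset_def)
        then have "s \<in> S" using p sX' by (auto simp: S_def)
        then show "\<exists>s. p = hp L s \<and> wft L s \<and> s \<noteq> t \<and> size s \<le> size t"
          using s tmax p sX' by auto
      qed
      have wfX': "\<forall>p\<in>set X'. wfp L p"
      proof
        fix p assume "p \<in> set X'"
        then obtain s where "p = hp L s" "wft L s" using X'form by blast
        then show "wfp L p" using wfp_hp by simp
      qed
      have wfX: "\<forall>p\<in>set X. wfp L p"
      proof
        fix p assume "p \<in> set X"
        then obtain s where "p = hp L s" "wft L s" using XH by (auto simp: Hset_def)
        then show "wfp L p" using wfp_hp by simp
      qed
      define u0 where "u0 = remdups (concat (map fst X') @ ts)"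
      define N where "N = length u0"
      define u where "u = u0 @ [t]"
      have tnts: "t \<notin> set ts" using size_sub[of t ts \<psi>] teq by auto
      have tnX': "t \<notin> vars X'"
      proof
        assume "t \<in> vars X'"
        then obtain p where p: "p \<in> set X'" "t \<in> set (fst p)" by (auto simp: vars_def)
        then obtain s where s: "p = hp L s" "s \<noteq> t" "size s \<le> size t" using X'form by blast
        obtain \<psi>' ts' where seq: "s = Eps \<psi>' ts'" by (cases s)
        have "t \<in> set ts'" using p s seq by auto
        then show False using size_sub[of t ts' \<psi>'] s seq by simp
      qed
      have vu0: "vars X' \<subseteq> set u0" by (auto simp: u0_def vars_def)
      have tu0: "t \<notin> set u0" using tnts tnX' by (auto simp: u0_def vars_def)
      have du0: "distinct u0" by (simp add: u0_def)
      have du: "distinct u" using du0 tu0 by (simp add: u_def)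
      have nz0: "Jf L u0 X' \<noteq> bot_s L N" using cons_iff[OF wfX' du0 vu0] consX' by (simp add: N_def)
      have J0C: "Jf L u0 X' \<in> carr L N" using Jf_C[OF wfX' vu0] by (simp add: N_def)
      have lu: "length u = Suc N" by (simp add: u_def N_def)
      have e1: "msubst L (Suc N) (cyl N) (Jf L u0 X') = Jf L u X'"
      proof -
        have g1: "subst_sym (length u0) (length u) (cyl N)" using subst_sym_cyl lu by (simp add: N_def)
        have g2: "\<forall>x\<in>vars X'. cyl N ! idx u0 x = idx u x"
        proof
          fix x assume "x \<in> vars X'"
          then have "x \<in> set u0" using vu0 by blast
          then show "cyl N ! idx u0 x = idx u x" by (simp add: cyl_def N_def u_def idx_lt idx_append)
        qed
        show ?thesis using Jf_trans[OF wfX' vu0 g1 g2] lu by simp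
      qed
      define \<alpha> where "\<alpha> = map (idx u0) ts"
      have sa: "subst_sym (length ts) N \<alpha>"
        by (auto simp: \<alpha>_def subst_sym_def N_def u0_def idx_lt)
      have mi: "map (idx u) (ts @ [t]) = \<alpha> @ [N]"
        using tu0 by (auto simp: u_def \<alpha>_def N_def idx_append idx_last u0_def)
      have nz1: "inf_s L (Suc N) (msubst L (Suc N) (cyl N) (Jf L u0 X'))
            (msubst L (Suc N) (\<alpha> @ [N]) (hen L (length ts) \<psi>)) \<noteq> bot_s L (Suc N)"
        by (rule conserv[OF J0C nz0 psi sa])
      have hC: "msubst L (Suc N) (\<alpha> @ [N]) (hen L (length ts) \<psi>) \<in> carr L (Suc N)"
      proof -
        have sb: "subst_sym (Suc (length ts)) (Suc N) (\<alpha> @ [N])" using sa by (auto simp: subst_sym_def)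
        show ?thesis using subst_C[OF sb hen_C[OF psi]] .
      qed
      have J1: "Jf L u (hp L t # X') \<noteq> bot_s L (length u)"
      proof -
        have JC: "Jf L u X' \<in> carr L (Suc N)" using Jf_C[OF wfX', of u] vu0 lu by (auto simp: u_def)
        have "inf_s L (Suc N) (msubst L (Suc N) (\<alpha> @ [N]) (hen L (length ts) \<psi>)) (Jf L u X') \<noteq> bot_s L (Suc N)"
          using nz1 e1 BA(30)[OF hC JC] by simp
        then show ?thesis using mi lu by (simp add: Jf_Cons teq)
      qed
      have wf1: "\<forall>p\<in>set (hp L t # X'). wfp L p" using wfX' wfp_hp[OF wt] by simp
      have v1: "vars (hp L t # X') \<subseteq> set u" using vu0 by (auto simp: teq u_def u0_def)
      have sub: "set X \<subseteq> set (hp L t # X')" using sX' by auto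
      have "vars X \<subseteq> vars (hp L t # X')" using sub unfolding vars_def by blast
      then have vX: "vars X \<subseteq> set u" using v1 by blast
      have "le_s L (length u) (Jf L u (hp L t # X')) (Jf L u X)"
        by (rule Jf_mono[OF wf1 v1 sub])
      then have "Jf L u X \<noteq> bot_s L (length u)"
        by (rule BAle(17)[OF Jf_C[OF wf1 v1] Jf_C[OF wfX vX] _ J1])
      moreover note vX
      ultimately show ?thesis using cons_iff[OF wfX du] by simp
    qed
  qed
qed

lemma hen_cons: "set X \<subseteq> Hset L \<Longrightarrow> cons L X"
  using hen_cons_aux by blast

end

context ba
begin
lemma two_zero: "x \<in> B \<Longrightarrow> y \<in> B \<Longrightarrow> a \<in> B \<Longrightarrow> mt a x = z \<Longrightarrow> mt (ng a) y = z \<Longrightarrow> mt x y = z"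
proof -
  assume x: "x \<in> B" and y: "y \<in> B" and a: "a \<in> B" and h1: "mt a x = z" and h2: "mt (ng a) y = z"
  have "mt (mt x y) a = mt (mt a x) y" using x y a by (metis mt_assoc mt_comm mtB)
  then have e1: "mt (mt x y) a = z" using h1 y by (simp add: z_mt)
  have "mt (mt x y) (ng a) = mt (mt (ng a) y) x" using x y a ngB by (metis mt_assoc mt_comm mtB)
  then have e2: "mt (mt x y) (ng a) = z" using h2 x by (simp add: z_mt)
  show ?thesis using zero_cases[OF mtB[OF x y] a e1 e2] .
qed

lemma jn_ng_zero: "a \<in> B \<Longrightarrow> b \<in> B \<Longrightarrow> mt (jn a b) (mt (ng a) (mt (ng b) u)) = z"
proof -
  assume a: "a \<in> B" and b: "b \<in> B"
  have e: "mt (ng a) (mt (ng b) u) = mt (ng a) (ng b)" using b ngB by (simp add: mt_u)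
  have 1: "mt a (mt (ng a) (ng b)) = z" using a b ngB by (metis compl2 mt_assoc z_mt)
  have 2: "mt b (mt (ng a) (ng b)) = z" using a b ngB by (metis compl2 mt_assoc mt_comm z_mt mtB)
  have "mt (jn a b) (mt (ng a) (ng b)) = jn (mt a (mt (ng a) (ng b))) (mt b (mt (ng a) (ng b)))"
    using a b ngB mtB by (metis distr mt_comm jnB)
  then show ?thesis using e 1 2 zB by (simp add: jn_z)
qed
end

context fol
begin
lemma two_zero: "x \<in> carr L n \<Longrightarrow> y \<in> carr L n \<Longrightarrow> a \<in> carr L n \<Longrightarrow> inf_s L n a x = bot_s L n \<Longrightarrow>
   inf_s L n (neg_s L n a) y = bot_s L n \<Longrightarrow> inf_s L n x y = bot_s L n"
  by (rule ba.two_zero[OF ba_L])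
lemma jn_ng_zero: "a \<in> carr L n \<Longrightarrow> b \<in> carr L n \<Longrightarrow>
  inf_s L n (sup_s L n a b) (inf_s L n (neg_s L n a) (inf_s L n (neg_s L n b) (top_s L n))) = bot_s L n"
  by (rule ba.jn_ng_zero[OF ba_L])

lemma cons_mono: assumes wf: "\<forall>p\<in>set Z. wfp L p" and sub: "set Y \<subseteq> set Z" and c: "cons L Z"
  and ne: "ex_s L 0 (top_s L 1) = top_s L 0"
  shows "cons L Y"
proof -
  interpret fol_ne L by unfold_locales (rule ne)
  define u where "u = remdups (concat (map fst Z))"
  have vZ: "vars Z \<subseteq> set u" by (auto simp: u_def vars_def)
  have vY: "vars Y \<subseteq> set u" using vZ sub by (auto simp: vars_def)
  have wfY: "\<forall>p\<in>set Y. wfp L p" using wf sub by auto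
  have "Jf L u Z \<noteq> bot_s L (length u)" using c cons_iff[OF wf _ vZ] by (simp add: u_def)
  then have "Jf L u Y \<noteq> bot_s L (length u)"
    using BAle(17)[OF Jf_C[OF wf vZ] Jf_C[OF wfY vY] Jf_mono[OF wf vZ sub]] by blast
  then show ?thesis using cons_iff[OF wfY _ vY] by (simp add: u_def)
qed

lemma Jf_same: assumes X: "\<forall>q\<in>set X. fst q = v \<and> snd q \<in> carr L (length v)" and vu: "set v \<subseteq> set u"
  shows "Jf L u X = msubst L (length u) (map (idx u) v) (big_inf L (length v) (map snd X))"
proof -
  have "msubst L (length u) (map (idx u) v) (big_inf L (length v) (map snd X)) =
     big_inf L (length u) (map (msubst L (length u) (map (idx u) v)) (map snd X))"
    by (rule bi_subst) (use subst_sym_idx[OF vu] X in auto)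
  also have "\<dots> = Jf L u X" unfolding Jf_def map_map o_def
    by (intro arg_cong[where f="big_inf L (length u)"] map_cong) (use X in auto)
  finally show ?thesis by simp
qed

end

locale maxc = fol_ne +
  fixes M :: "('a trm list \<times> 'a) set"
  assumes HM: "Hset L \<subseteq> M" and wfM: "\<And>p. p \<in> M \<Longrightarrow> wfp L p"
    and consM: "\<And>X. set X \<subseteq> M \<Longrightarrow> cons L X"
    and maxM: "\<And>S. M \<subseteq> S \<Longrightarrow> (\<And>p. p \<in> S \<Longrightarrow> wfp L p) \<Longrightarrow> (\<And>X. set X \<subseteq> S \<Longrightarrow> cons L X) \<Longrightarrow> S = M"
begin

lemma add_incons: assumes wp: "wfp L p" and pM: "p \<notin> M"
  shows "\<exists>X. set X \<subseteq> M \<and> \<not> cons L (p # X)"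
proof (rule ccontr)
  assume a: "\<not> (\<exists>X. set X \<subseteq> M \<and> \<not> cons L (p # X))"
  have "insert p M = M"
  proof (rule maxM)
    show "\<And>q. q \<in> insert p M \<Longrightarrow> wfp L q" using wp wfM by auto
    show "cons L Y" if Y: "set Y \<subseteq> insert p M" for Y
    proof -
      define X where "X = filter (\<lambda>q. q \<noteq> p) Y"
      have XM: "set X \<subseteq> M" using Y by (auto simp: X_def)
      then have c: "cons L (p # X)" using a by blast
      have wf: "\<forall>q\<in>set (p # X). wfp L q" using XM wfM wp by auto
      show ?thesis by (rule cons_mono[OF wf _ c ne]) (auto simp: X_def)
    qed
  qed auto
  then show False using pM by auto
qed

lemma Jcons: assumes XM: "set X \<subseteq> M" and d: "distinct u" and v: "vars X \<subseteq> set u"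
  shows "Jf L u X \<noteq> bot_s L (length u)"
proof -
  have wf: "\<forall>p\<in>set X. wfp L p" using XM wfM by auto
  show ?thesis using cons_iff[OF wf d v] consM[OF XM] by simp
qed

lemma ultra: assumes r: "r \<in> carr L (length v)"
  shows "(v, r) \<in> M \<or> (v, neg_s L (length v) r) \<in> M"
proof (rule ccontr)
  assume a: "\<not> ?thesis"
  have w1: "wfp L (v, r)" and w2: "wfp L (v, neg_s L (length v) r)" using r by (auto simp: wfp_def)
  obtain X1 where X1: "set X1 \<subseteq> M" "\<not> cons L ((v, r) # X1)" using add_incons[OF w1] a by blast
  obtain X2 where X2: "set X2 \<subseteq> M" "\<not> cons L ((v, neg_s L (length v) r) # X2)" using add_incons[OF w2] a by blast
  define u where "u = remdups (v @ concat (map fst (X1 @ X2)))"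
  have d: "distinct u" by (simp add: u_def)
  have vu: "set v \<subseteq> set u" by (auto simp: u_def)
  have v1: "vars X1 \<subseteq> set u" and v2: "vars X2 \<subseteq> set u" by (auto simp: u_def vars_def)
  have wf1: "\<forall>p\<in>set X1. wfp L p" and wf2: "\<forall>p\<in>set X2. wfp L p" using X1 X2 wfM by auto
  define a where "a = msubst L (length u) (map (idx u) v) r"
  have ss: "subst_sym (length v) (length u) (map (idx u) v)" by (rule subst_sym_idx[OF vu])
  have aC: "a \<in> carr L (length u)" using ss r by (simp add: a_def)
  have na: "msubst L (length u) (map (idx u) v) (neg_s L (length v) r) = neg_s L (length u) a"
    using s_neg[OF ss r] by (simp add: a_def)
  have c1: "inf_s L (length u) a (Jf L u X1) = bot_s L (length u)"
  proof -
    have wf: "\<forall>p\<in>set ((v, r) # X1). wfp L p" using wf1 w1 by auto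
    have "vars ((v, r) # X1) \<subseteq> set u" using v1 vu by auto
    then have "Jf L u ((v, r) # X1) = bot_s L (length u)" using cons_iff[OF wf d] X1(2) by simp
    then show ?thesis by (simp add: Jf_Cons a_def)
  qed
  have c2: "inf_s L (length u) (neg_s L (length u) a) (Jf L u X2) = bot_s L (length u)"
  proof -
    have wf: "\<forall>p\<in>set ((v, neg_s L (length v) r) # X2). wfp L p" using wf2 w2 by auto
    have "vars ((v, neg_s L (length v) r) # X2) \<subseteq> set u" using v2 vu by auto
    then have "Jf L u ((v, neg_s L (length v) r) # X2) = bot_s L (length u)" using cons_iff[OF wf d] X2(2) by simp
    then show ?thesis using na by (simp add: Jf_Cons)
  qed
  have "inf_s L (length u) (Jf L u X1) (Jf L u X2) = bot_s L (length u)"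
    by (rule two_zero[OF Jf_C[OF wf1 v1] Jf_C[OF wf2 v2] aC c1 c2])
  moreover have "Jf L u (X1 @ X2) = inf_s L (length u) (Jf L u X1) (Jf L u X2)"
    by (rule Jf_append) (use wf1 wf2 v1 v2 in auto)
  moreover have "Jf L u (X1 @ X2) \<noteq> bot_s L (length u)"
    by (rule Jcons) (use X1 X2 d v1 v2 in auto)
  ultimately show False by simp
qed

lemma entail: assumes XM: "set X \<subseteq> M" and d: "distinct u" and vX: "vars X \<subseteq> set u"
  and vp: "set v \<subseteq> set u" and s: "s \<in> carr L (length v)"
  and le: "le_s L (length u) (Jf L u X) (msubst L (length u) (map (idx u) v) s)"
  shows "(v, s) \<in> M"
proof (rule ccontr)
  assume "(v, s) \<notin> M"
  then have nM: "(v, neg_s L (length v) s) \<in> M" using ultra[OF s] by simp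
  have ss: "subst_sym (length v) (length u) (map (idx u) v)" by (rule subst_sym_idx[OF vp])
  have wf: "\<forall>p\<in>set X. wfp L p" using XM wfM by auto
  have JC: "Jf L u X \<in> carr L (length u)" by (rule Jf_C[OF wf vX])
  have sC: "msubst L (length u) (map (idx u) v) s \<in> carr L (length u)" using ss s by simp
  have "Jf L u ((v, neg_s L (length v) s) # X) =
      inf_s L (length u) (neg_s L (length u) (msubst L (length u) (map (idx u) v) s)) (Jf L u X)"
    by (simp add: Jf_Cons s_neg[OF ss s])
  also have "\<dots> = bot_s L (length u)"
    using BAle(20)[OF JC sC le] BA(30)[OF JC neg_C[OF sC]] by simp
  finally show False using Jcons[of "(v, neg_s L (length v) s) # X" u] XM nM d vX vp by auto
qed

lemma same_entail: assumes XM: "set X \<subseteq> M" and X: "\<forall>q\<in>set X. fst q = v \<and> snd q \<in> carr L (length v)"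
  and s: "s \<in> carr L (length v)" and le: "le_s L (length v) (big_inf L (length v) (map snd X)) s"
  shows "(v, s) \<in> M"
proof -
  define u where "u = remdups v"
  have vu: "set v \<subseteq> set u" by (simp add: u_def)
  have vX: "vars X \<subseteq> set u" using X by (auto simp: vars_def u_def)
  have ss: "subst_sym (length v) (length u) (map (idx u) v)" by (rule subst_sym_idx[OF vu])
  have bC: "big_inf L (length v) (map snd X) \<in> carr L (length v)" using X by (auto intro!: bi_C)
  show ?thesis
    by (rule entail[OF XM _ vX vu s]) (use s_le[OF ss bC s le] Jf_same[OF X vu] in \<open>auto simp: u_def\<close>)
qed

lemma same_cons: assumes XM: "set X \<subseteq> M" and X: "\<forall>q\<in>set X. fst q = v \<and> snd q \<in> carr L (length v)"
  shows "big_inf L (length v) (map snd X) \<noteq> bot_s L (length v)"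
proof
  assume b: "big_inf L (length v) (map snd X) = bot_s L (length v)"
  define u where "u = remdups v"
  have vu: "set v \<subseteq> set u" by (simp add: u_def)
  have vX: "vars X \<subseteq> set u" using X by (auto simp: vars_def u_def)
  have ss: "subst_sym (length v) (length u) (map (idx u) v)" by (rule subst_sym_idx[OF vu])
  have "Jf L u X = bot_s L (length u)" using Jf_same[OF X vu] b ss by simp
  then show False using Jcons[OF XM _ vX] by (simp add: u_def)
qed

end

context maxc
begin

lemma T_top: "(v, top_s L (length v)) \<in> M"
  using same_entail[of "[]" v "top_s L (length v)"] by (simp add: bi_nil BAle(8))

lemma T_bot: "(v, bot_s L (length v)) \<notin> M"
  using same_cons[of "[(v, bot_s L (length v))]" v] by (auto simp: bi_single)

lemma T_inf: assumes r: "r \<in> carr L (length v)" and s: "s \<in> carr L (length v)"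
  shows "(v, inf_s L (length v) r s) \<in> M \<longleftrightarrow> (v, r) \<in> M \<and> (v, s) \<in> M"
proof
  assume h: "(v, inf_s L (length v) r s) \<in> M"
  have "le_s L (length v) (big_inf L (length v) (map snd [(v, inf_s L (length v) r s)])) r"
    "le_s L (length v) (big_inf L (length v) (map snd [(v, inf_s L (length v) r s)])) s"
    using r s by (simp_all add: bi_single BAle(12) BAle(13))
  then show "(v, r) \<in> M \<and> (v, s) \<in> M"
    using same_entail[of "[(v, inf_s L (length v) r s)]" v] h r s by auto
next
  assume h: "(v, r) \<in> M \<and> (v, s) \<in> M"
  have "le_s L (length v) (big_inf L (length v) (map snd [(v, r), (v, s)])) (inf_s L (length v) r s)"
    using r s by (simp add: bi_cons bi_nil BA(26) BAle(8))
  then show "(v, inf_s L (length v) r s) \<in> M"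
    using same_entail[of "[(v, r), (v, s)]" v] h r s by auto
qed

lemma T_neg: assumes r: "r \<in> carr L (length v)"
  shows "(v, neg_s L (length v) r) \<in> M \<longleftrightarrow> (v, r) \<notin> M"
proof
  assume h: "(v, neg_s L (length v) r) \<in> M"
  show "(v, r) \<notin> M"
  proof
    assume "(v, r) \<in> M"
    then show False using same_cons[of "[(v, r), (v, neg_s L (length v) r)]" v] h r
      by (simp add: bi_cons bi_nil BA(26) BA(29))
  qed
next
  assume "(v, r) \<notin> M" then show "(v, neg_s L (length v) r) \<in> M" using ultra[OF r] by simp
qed

lemma T_mono: assumes r: "r \<in> carr L (length v)" and s: "s \<in> carr L (length v)"
  and le: "le_s L (length v) r s" and h: "(v, r) \<in> M" shows "(v, s) \<in> M"
  using same_entail[of "[(v, r)]" v s] h r s le by (simp add: bi_single)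

lemma T_sup: assumes r: "r \<in> carr L (length v)" and s: "s \<in> carr L (length v)"
  shows "(v, sup_s L (length v) r s) \<in> M \<longleftrightarrow> (v, r) \<in> M \<or> (v, s) \<in> M"
proof
  assume h: "(v, sup_s L (length v) r s) \<in> M"
  show "(v, r) \<in> M \<or> (v, s) \<in> M"
  proof (rule ccontr)
    assume "\<not> ?thesis"
    then have "(v, neg_s L (length v) r) \<in> M" "(v, neg_s L (length v) s) \<in> M" using ultra r s by blast+
    then show False
      using same_cons[of "[(v, sup_s L (length v) r s), (v, neg_s L (length v) r), (v, neg_s L (length v) s)]" v]
        h r s jn_ng_zero[OF r s] by (simp add: bi_cons bi_nil)
  qed
next
  assume "(v, r) \<in> M \<or> (v, s) \<in> M"
  then show "(v, sup_s L (length v) r s) \<in> M"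
    using T_mono[OF r sup_C[OF r s] BAle(18)[OF r s]] T_mono[OF s sup_C[OF r s] BAle(19)[OF r s]] by blast
qed

lemma T_subst: assumes sa: "subst_sym n (length v) \<alpha>" and r: "r \<in> carr L n"
  shows "(v, msubst L (length v) \<alpha> r) \<in> M \<longleftrightarrow> (map (nth v) \<alpha>, r) \<in> M"
proof -
  define u where "u = remdups v"
  have d: "distinct u" by (simp add: u_def)
  have vu: "set v \<subseteq> set u" by (simp add: u_def)
  have len: "length \<alpha> = n" and lt: "\<forall>j\<in>set \<alpha>. j < length v" using sa by (auto simp: subst_sym_def)
  have vu2: "set (map (nth v) \<alpha>) \<subseteq> set u" using lt vu by auto
  have ss: "subst_sym (length v) (length u) (map (idx u) v)" by (rule subst_sym_idx[OF vu])
  have ss2: "subst_sym n (length u) (map (idx u) (map (nth v) \<alpha>))" using subst_sym_idx[OF vu2] len by simp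
  have mm: "map (nth (map (idx u) v)) \<alpha> = map (idx u) (map (nth v) \<alpha>)" using lt by auto
  have eq: "msubst L (length u) (map (idx u) v) (msubst L (length v) \<alpha> r) =
        msubst L (length u) (map (idx u) (map (nth v) \<alpha>)) r"
    using s_comp[OF sa ss r] mm by simp
  have sC: "msubst L (length v) \<alpha> r \<in> carr L (length v)" using sa r by simp
  have rC': "r \<in> carr L (length (map (nth v) \<alpha>))" using r len by simp
  have tC: "msubst L (length u) (map (idx u) (map (nth v) \<alpha>)) r \<in> carr L (length u)" using subst_C[OF ss2 r] .
  show ?thesis
  proof
    assume h: "(v, msubst L (length v) \<alpha> r) \<in> M"
    show "(map (nth v) \<alpha>, r) \<in> M"
      by (rule entail[of "[(v, msubst L (length v) \<alpha> r)]" u]) (use h d vu vu2 rC' ss sC eq tC in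
        \<open>auto simp: Jf_Cons Jf_nil BA(26) BAle(8)\<close>)
  next
    assume h: "(map (nth v) \<alpha>, r) \<in> M"
    show "(v, msubst L (length v) \<alpha> r) \<in> M"
      by (rule entail[of "[(map (nth v) \<alpha>, r)]" u]) (use h d vu vu2 rC' ss2 sC eq r tC in
        \<open>auto simp: Jf_Cons Jf_nil BA(26) BAle(8)\<close>)
  qed
qed

lemma T_ex: assumes r: "r \<in> carr L (Suc (length v))"
  shows "(v, ex_s L (length v) r) \<in> M \<longleftrightarrow> (\<exists>w. (v @ [w], r) \<in> M)"
proof
  assume h: "(v, ex_s L (length v) r) \<in> M"
  define c where "c = Eps r v"
  have "wft L c" using r by (simp add: c_def)
  then have "hp L c \<in> Hset L" unfolding Hset_def by blast
  then have "hp L c \<in> M" using HM by blast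
  then have h1: "(v @ [c], hen L (length v) r) \<in> M" by (simp add: c_def)
  have sc: "subst_sym (length v) (length (v @ [c])) (cyl (length v))" using subst_sym_cyl by simp
  have exC: "ex_s L (length v) r \<in> carr L (length v)" using r by simp
  have "map (nth (v @ [c])) (cyl (length v)) = v" by (rule nth_equalityI) (auto simp: cyl_def nth_append)
  then have h2: "(v @ [c], msubst L (Suc (length v)) (cyl (length v)) (ex_s L (length v) r)) \<in> M"
    using T_subst[OF sc exC] h by simp
  have aC: "msubst L (Suc (length v)) (cyl (length v)) (ex_s L (length v) r) \<in> carr L (Suc (length v))"
    using subst_C[OF subst_sym_cyl exC] .
  have "(v @ [c], neg_s L (length (v @ [c])) (msubst L (Suc (length v)) (cyl (length v)) (ex_s L (length v) r))) \<in> M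
        \<or> (v @ [c], r) \<in> M"
    using T_sup[of "neg_s L (Suc (length v)) (msubst L (Suc (length v)) (cyl (length v)) (ex_s L (length v) r))" "v @ [c]" r]
      h1 aC r by (simp add: hen_def)
  then have "(v @ [c], r) \<in> M" using T_neg[of _ "v @ [c]"] aC h2 by auto
  then show "\<exists>w. (v @ [w], r) \<in> M" by blast
next
  assume "\<exists>w. (v @ [w], r) \<in> M"
  then obtain w where h: "(v @ [w], r) \<in> M" by blast
  have sc: "subst_sym (length v) (length (v @ [w])) (cyl (length v))" using subst_sym_cyl by simp
  have exC: "ex_s L (length v) r \<in> carr L (length v)" using r by simp
  have "(v @ [w], msubst L (Suc (length v)) (cyl (length v)) (ex_s L (length v) r)) \<in> M"
    using T_mono[of r "v @ [w]"] r ex_le[OF r] subst_C[OF subst_sym_cyl exC] h by simp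
  moreover have "map (nth (v @ [w])) (cyl (length v)) = v" by (rule nth_equalityI) (auto simp: cyl_def nth_append)
  ultimately show "(v, ex_s L (length v) r) \<in> M" using T_subst[OF sc exC] by simp
qed

end

definition hm :: "('v list \<times> 'a) set \<Rightarrow> nat \<Rightarrow> 'a \<Rightarrow> 'v list set" where
  "hm M n r = {v. length v = n \<and> (v, r) \<in> M}"

lemma tuples_UNIV: "tuples UNIV n = {xs. length xs = n}"
  by (simp add: tuples_def)

context fol
begin

lemma ex_iter_C: "x \<in> carr L (m + n) \<Longrightarrow> ex_iter L m n x \<in> carr L m"
proof (induction n arbitrary: x)
  case (Suc n)
  then show ?case by simp
qed simp

lemma ex_iter_nz: "x \<in> carr L (m + n) \<Longrightarrow> x \<noteq> bot_s L (m + n) \<Longrightarrow> ex_iter L m n x \<noteq> bot_s L m"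
proof (induction n arbitrary: x)
  case (Suc n)
  then show ?case using ex_nz[of x "m + n"] by simp
qed simp

end

context maxc
begin

lemma realize_iter: "x \<in> carr L (m + n) \<Longrightarrow> (v, ex_iter L m n x) \<in> M \<Longrightarrow> length v = m \<Longrightarrow>
   \<exists>w. length w = n \<and> (v @ w, x) \<in> M"
proof (induction n arbitrary: x)
  case 0
  then show ?case by simp
next
  case (Suc n)
  have xC: "ex_s L (m + n) x \<in> carr L (m + n)" using Suc.prems by simp
  obtain w where w: "length w = n" "(v @ w, ex_s L (m + n) x) \<in> M"
    using Suc.IH[OF xC] Suc.prems by auto
  have "(v @ w, ex_s L (length (v @ w)) x) \<in> M" using w Suc.prems by simp
  moreover have "x \<in> carr L (Suc (length (v @ w)))" using w Suc.prems by simp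
  ultimately obtain y where "((v @ w) @ [y], x) \<in> M" using T_ex by blast
  then show ?case using w by (intro exI[of _ "w @ [y]"]) simp
qed

lemma realize: assumes x: "x \<in> carr L n" and nz: "x \<noteq> bot_s L n"
  shows "\<exists>v. length v = n \<and> (v, x) \<in> M"
proof -
  have "ex_iter L 0 n x \<in> carr L 0" using ex_iter_C[of x 0 n] x by simp
  moreover have "ex_iter L 0 n x \<noteq> bot_s L 0" using ex_iter_nz[of x 0 n] x nz by simp
  ultimately have "ex_iter L 0 n x = top_s L 0" using two_valued by blast
  then have "([], ex_iter L 0 n x) \<in> M" using T_top[of "[]"] by simp
  then show ?thesis using realize_iter[of x 0 n "[]"] x by simp
qed

lemma hm_inj: "inj_on (hm M n) (carr L n)"
proof (rule inj_onI)
  fix r s assume r: "r \<in> carr L n" and s: "s \<in> carr L n" and e: "hm M n r = hm M n s"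
  show "r = s"
  proof (rule ccontr)
    assume "r \<noteq> s"
    then have "inf_s L n r (neg_s L n s) \<noteq> bot_s L n \<or> inf_s L n s (neg_s L n r) \<noteq> bot_s L n"
      using BA(22)[OF r s] by blast
    then show False
    proof
      assume "inf_s L n r (neg_s L n s) \<noteq> bot_s L n"
      then obtain v where v: "length v = n" "(v, inf_s L n r (neg_s L n s)) \<in> M"
        using realize[of "inf_s L n r (neg_s L n s)" n] r s by auto
      then have "(v, r) \<in> M" "(v, s) \<notin> M" using T_inf[of r v "neg_s L n s"] T_neg[of s v] r s by auto
      then show False using e v by (auto simp: hm_def set_eq_iff)
    next
      assume "inf_s L n s (neg_s L n r) \<noteq> bot_s L n"
      then obtain v where v: "length v = n" "(v, inf_s L n s (neg_s L n r)) \<in> M"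
        using realize[of "inf_s L n s (neg_s L n r)" n] r s by auto
      then have "(v, s) \<in> M" "(v, r) \<notin> M" using T_inf[of s v "neg_s L n r"] T_neg[of r v] r s by auto
      then show False using e v by (auto simp: hm_def set_eq_iff)
    qed
  qed
qed

lemma hm_bot: "hm M n (bot_s L n) = {}"
  using T_bot by (auto simp: hm_def)
lemma hm_top: "hm M n (top_s L n) = tuples UNIV n"
  using T_top by (auto simp: hm_def tuples_UNIV)
lemma hm_sup: "r \<in> carr L n \<Longrightarrow> s \<in> carr L n \<Longrightarrow> hm M n (sup_s L n r s) = hm M n r \<union> hm M n s"
  using T_sup by (auto simp: hm_def)
lemma hm_inf: "r \<in> carr L n \<Longrightarrow> s \<in> carr L n \<Longrightarrow> hm M n (inf_s L n r s) = hm M n r \<inter> hm M n s"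
  using T_inf by (auto simp: hm_def)
lemma hm_neg: "r \<in> carr L n \<Longrightarrow> hm M n (neg_s L n r) = tuples UNIV n - hm M n r"
  using T_neg by (auto simp: hm_def tuples_UNIV)
lemma hm_ex: "r \<in> carr L (Suc n) \<Longrightarrow>
   hm M n (ex_s L n r) = {xs \<in> tuples UNIV n. \<exists>y\<in>UNIV. xs @ [y] \<in> hm M (Suc n) r}"
  using T_ex by (auto simp: hm_def tuples_UNIV)
lemma hm_subst: "subst_sym n k \<alpha> \<Longrightarrow> r \<in> carr L n \<Longrightarrow>
   hm M k (msubst L k \<alpha> r) = {xs \<in> tuples UNIV k. map (nth xs) \<alpha> \<in> hm M n r}"
  using T_subst[of n _ \<alpha> r] by (auto simp: hm_def tuples_UNIV subst_sym_def)

lemma model: "iso_to_subalg_of_fo L (UNIV :: 'a trm set)"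
proof -
  define S where "S n = hm M n ` carr L n" for n
  let ?Mo = "fo_alg (UNIV :: 'a trm set)"
  have hom: "is_hom (hm M) L (?Mo\<lparr>carr := S\<rparr>)"
    unfolding is_hom_def
    by (simp add: fo_alg_def hm_bot hm_top hm_sup hm_inf hm_neg hm_ex hm_subst)
  have sub: "subalgebra S ?Mo"
    unfolding subalgebra_def
  proof (intro conjI allI impI ballI)
    show "S n \<subseteq> carr ?Mo n" for n by (auto simp: S_def fo_alg_def hm_def tuples_UNIV)
    show "bot_s ?Mo n \<in> S n" for n
      unfolding S_def by (simp add: fo_alg_def) (rule image_eqI[where f="hm M n", OF hm_bot[of n, symmetric] bot_C])
    show "top_s ?Mo n \<in> S n" for n
      unfolding S_def by (simp add: fo_alg_def) (rule image_eqI[where f="hm M n", OF hm_top[of n, symmetric] top_C])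
    show "sup_s ?Mo n x y \<in> S n" if H: "x \<in> S n" "y \<in> S n" for n x y
    proof -
      obtain r where r: "r \<in> carr L n" "x = hm M n r" using H(1) unfolding S_def by blast
      obtain s where s: "s \<in> carr L n" "y = hm M n s" using H(2) unfolding S_def by blast
      note rs = r s
      then have "sup_s ?Mo n x y = hm M n (sup_s L n r s)" by (simp add: fo_alg_def hm_sup)
      then show ?thesis using rs unfolding S_def by (simp add: image_eqI)
    qed
    show "inf_s ?Mo n x y \<in> S n" if H: "x \<in> S n" "y \<in> S n" for n x y
    proof -
      obtain r where r: "r \<in> carr L n" "x = hm M n r" using H(1) unfolding S_def by blast
      obtain s where s: "s \<in> carr L n" "y = hm M n s" using H(2) unfolding S_def by blast
      note rs = r s
      then have "inf_s ?Mo n x y = hm M n (inf_s L n r s)" by (simp add: fo_alg_def hm_inf)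
      then show ?thesis using rs unfolding S_def by (simp add: image_eqI)
    qed
    show "neg_s ?Mo n x \<in> S n" if H: "x \<in> S n" for n x
    proof -
      obtain r where rs: "r \<in> carr L n" "x = hm M n r" using H unfolding S_def by blast
      then have "neg_s ?Mo n x = hm M n (neg_s L n r)" by (simp add: fo_alg_def hm_neg)
      then show ?thesis using rs unfolding S_def by (simp add: image_eqI)
    qed
    show "ex_s ?Mo n x \<in> S n" if H: "x \<in> S (Suc n)" for n x
    proof -
      obtain r where rs: "r \<in> carr L (Suc n)" "x = hm M (Suc n) r" using H unfolding S_def by blast
      then have "ex_s ?Mo n x = hm M n (ex_s L n r)" by (simp add: fo_alg_def hm_ex)
      then show ?thesis using rs unfolding S_def by (simp add: image_eqI)
    qed
    show "msubst ?Mo k \<alpha> x \<in> S k" if H: "subst_sym n k \<alpha>" "x \<in> S n" for n k \<alpha> x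
    proof -
      obtain r where rs: "r \<in> carr L n" "x = hm M n r" using H unfolding S_def by blast
      then have "msubst ?Mo k \<alpha> x = hm M k (msubst L k \<alpha> r)" using H(1) by (simp add: fo_alg_def hm_subst)
      then show ?thesis using rs H(1) unfolding S_def by (simp add: image_eqI)
    qed
  qed
  have bij: "bij_betw (hm M n) (carr L n) (carr (?Mo\<lparr>carr := S\<rparr>) n)" for n
    using hm_inj[of n] by (simp add: bij_betw_def S_def)
  show ?thesis unfolding iso_to_subalg_of_fo_def is_iso_def using sub bij hom by blast
qed

end

context fol_ne
begin

lemma chain_fin: assumes ne: "C \<noteq> {}" and ch: "\<forall>S\<in>C. \<forall>T\<in>C. S \<subseteq> T \<or> T \<subseteq> S"
  shows "set X \<subseteq> \<Union>C \<Longrightarrow> \<exists>S\<in>C. set X \<subseteq> S"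
proof (induction X)
  case Nil then show ?case using ne by auto
next
  case (Cons p X)
  then obtain S where S: "S \<in> C" "set X \<subseteq> S" by auto
  obtain T where T: "T \<in> C" "p \<in> T" using Cons.prems by auto
  show ?case using ch S T by (metis insert_subset list.simps(15) subset_trans)
qed

lemma exists_maxc: "\<exists>M. maxc L M"
proof -
  define A where "A = {S. Hset L \<subseteq> S \<and> (\<forall>p\<in>S. wfp L p) \<and> (\<forall>X. set X \<subseteq> S \<longrightarrow> cons L X)}"
  have HA: "Hset L \<in> A"
    unfolding A_def using hen_cons wfp_hp by (auto simp: Hset_def)
  have "\<exists>M\<in>A. \<forall>X\<in>A. M \<subseteq> X \<longrightarrow> X = M"
  proof (rule subset_Zorn_nonempty)
    show "A \<noteq> {}" using HA by blast
    fix C assume ne: "C \<noteq> {}" and ch: "subset.chain A C"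
    have CA: "C \<subseteq> A" and chh: "\<forall>S\<in>C. \<forall>T\<in>C. S \<subseteq> T \<or> T \<subseteq> S"
      using ch by (auto simp: subset.chain_def)
    show "\<Union>C \<in> A" unfolding A_def
    proof (intro CollectI conjI allI impI ballI)
      obtain S0 where "S0 \<in> C" using ne by blast
      moreover have "Hset L \<subseteq> S0" using CA \<open>S0 \<in> C\<close> by (auto simp: A_def)
      ultimately show "Hset L \<subseteq> \<Union>C" by blast
      show "wfp L p" if "p \<in> \<Union>C" for p using that CA by (auto simp: A_def)
      show "cons L X" if "set X \<subseteq> \<Union>C" for X
        using chain_fin[OF ne chh that] CA by (auto simp: A_def)
    qed
  qed
  then obtain M where MA: "M \<in> A" and mx: "\<forall>X\<in>A. M \<subseteq> X \<longrightarrow> X = M" by blast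
  have "maxc L M"
  proof unfold_locales
    show "Hset L \<subseteq> M" using MA by (simp add: A_def)
    show "wfp L p" if "p \<in> M" for p using MA that by (simp add: A_def)
    show "cons L X" if "set X \<subseteq> M" for X using MA that by (simp add: A_def)
    show "S = M" if "M \<subseteq> S" "\<And>p. p \<in> S \<Longrightarrow> wfp L p" "\<And>X. set X \<subseteq> S \<Longrightarrow> cons L X" for S
    proof -
      have "Hset L \<subseteq> S" using MA that(1) by (auto simp: A_def)
      then have "S \<in> A" using that(2,3) by (auto simp: A_def)
      then show ?thesis using mx that(1) by blast
    qed
  qed
  then show ?thesis by blast
qed

lemma model_exists: "\<exists>W :: 'a trm set. iso_to_subalg_of_fo L W"
proof -
  obtain M where "maxc L M" using exists_maxc by blast
  then interpret maxc L M .
  show ?thesis using model by blast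
qed

end

lemma is_hom_carr: "is_hom h L (M\<lparr>carr := S\<rparr>) \<longleftrightarrow> is_hom h L M"
  by (simp add: is_hom_def)

lemma iso_from_hom:
  assumes ms: "is_msalg L" and hom: "is_hom h L (fo_alg W)"
    and into: "\<And>n. h n ` carr L n \<subseteq> Pow (tuples W n)" and inj: "\<And>n. inj_on (h n) (carr L n)"
  shows "iso_to_subalg_of_fo L W"
proof -
  define S where "S n = h n ` carr L n" for n
  let ?Mo = "fo_alg W"
  have H: "\<forall>n. h n (bot_s L n) = bot_s ?Mo n \<and> h n (top_s L n) = top_s ?Mo n"
    "\<forall>n. \<forall>x\<in>carr L n. \<forall>y\<in>carr L n.
        h n (sup_s L n x y) = sup_s ?Mo n (h n x) (h n y) \<and>
        h n (inf_s L n x y) = inf_s ?Mo n (h n x) (h n y)"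
    "\<forall>n. \<forall>x\<in>carr L n. h n (neg_s L n x) = neg_s ?Mo n (h n x)"
    "\<forall>n. \<forall>x\<in>carr L (Suc n). h n (ex_s L n x) = ex_s ?Mo n (h (Suc n) x)"
    "\<forall>n k \<alpha>. subst_sym n k \<alpha> \<longrightarrow> (\<forall>x\<in>carr L n. h k (msubst L k \<alpha> x) = msubst ?Mo k \<alpha> (h n x))"
    using hom unfolding is_hom_def by blast+
  have C: "\<forall>n. bot_s L n \<in> carr L n \<and> top_s L n \<in> carr L n"
     "\<forall>n. \<forall>x\<in>carr L n. \<forall>y\<in>carr L n. sup_s L n x y \<in> carr L n \<and> inf_s L n x y \<in> carr L n"
     "\<forall>n. \<forall>x\<in>carr L n. neg_s L n x \<in> carr L n"
     "\<forall>n. \<forall>x\<in>carr L (Suc n). ex_s L n x \<in> carr L n"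
     "\<forall>n k \<alpha>. subst_sym n k \<alpha> \<longrightarrow> (\<forall>x\<in>carr L n. msubst L k \<alpha> x \<in> carr L k)"
    using ms unfolding is_msalg_def by blast+
  have sub: "subalgebra S ?Mo"
    unfolding subalgebra_def
  proof (intro conjI allI impI ballI)
    show "S n \<subseteq> carr ?Mo n" for n using into[of n] by (simp add: S_def fo_alg_def)
    show "bot_s ?Mo n \<in> S n" for n unfolding S_def using H(1) C(1) by (metis image_eqI)
    show "top_s ?Mo n \<in> S n" for n unfolding S_def using H(1) C(1) by (metis image_eqI)
    show "sup_s ?Mo n x y \<in> S n" if X: "x \<in> S n" "y \<in> S n" for n x y
    proof -
      obtain r where r: "r \<in> carr L n" "x = h n r" using X(1) unfolding S_def by blast
      obtain s where s: "s \<in> carr L n" "y = h n s" using X(2) unfolding S_def by blast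
      show ?thesis unfolding S_def using H(2) C(2) r s by (metis image_eqI)
    qed
    show "inf_s ?Mo n x y \<in> S n" if X: "x \<in> S n" "y \<in> S n" for n x y
    proof -
      obtain r where r: "r \<in> carr L n" "x = h n r" using X(1) unfolding S_def by blast
      obtain s where s: "s \<in> carr L n" "y = h n s" using X(2) unfolding S_def by blast
      show ?thesis unfolding S_def using H(2) C(2) r s by (metis image_eqI)
    qed
    show "neg_s ?Mo n x \<in> S n" if X: "x \<in> S n" for n x
    proof -
      obtain r where r: "r \<in> carr L n" "x = h n r" using X(1) unfolding S_def by blast
      show ?thesis unfolding S_def using H(3) C(3) r by (metis image_eqI)
    qed
    show "ex_s ?Mo n x \<in> S n" if X: "x \<in> S (Suc n)" for n x
    proof -
      obtain r where r: "r \<in> carr L (Suc n)" "x = h (Suc n) r" using X(1) unfolding S_def by blast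
      show ?thesis unfolding S_def using H(4) C(4) r by (metis image_eqI)
    qed
    show "msubst ?Mo k \<alpha> x \<in> S k" if X: "subst_sym n k \<alpha>" "x \<in> S n" for n k \<alpha> x
    proof -
      obtain r where r: "r \<in> carr L n" "x = h n r" using X(2) unfolding S_def by blast
      show ?thesis unfolding S_def using H(5) C(5) r X(1) by (metis image_eqI)
    qed
  qed
  have bij: "bij_betw (h n) (carr L n) (carr (?Mo\<lparr>carr := S\<rparr>) n)" for n
    using inj[of n] by (simp add: bij_betw_def S_def)
  show ?thesis unfolding iso_to_subalg_of_fo_def is_iso_def
    using sub bij hom by (auto simp: is_hom_carr)
qed

context fol
begin

lemma empty_case: assumes e: "ex_s L 0 (top_s L 1) \<noteq> top_s L 0"
  shows "iso_to_subalg_of_fo L ({} :: 'w set)"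
proof -
  have e0: "ex_s L 0 (top_s L 1) = bot_s L 0" using two_valued[of "ex_s L 0 (top_s L 1)"] e by simp
  have "le_s L 1 (top_s L 1) (msubst L 1 (cyl 0) (bot_s L 0))"
    using ex_le[of "top_s L 1" 0] e0 by simp
  then have t1: "top_s L 1 = bot_s L 1" using subst_sym_cyl[of 0] BAle(16)[of "top_s L 1" 1] by simp
  have tn: "top_s L n = bot_s L n" if "n > 0" for n
  proof -
    have s: "subst_sym 1 n [0]" using that by (simp add: subst_sym_def)
    show ?thesis using s_top[OF s] s_bot[OF s] t1 by simp
  qed
  have triv: "x = bot_s L n" if "n > 0" "x \<in> carr L n" for n x
    using tn[OF that(1)] BA(26)[OF that(2)] BA(4)[OF that(2)] by simp
  define h :: "nat \<Rightarrow> 'a \<Rightarrow> 'w list set" where "h n x = (if n = 0 \<and> x = top_s L 0 then {[]} else {})" for n x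
  have tE: "tuples ({} :: 'w set) n = (if n = 0 then {[]} else {})" for n
    by (auto simp: tuples_def)
  have h0: "x \<in> carr L 0 \<Longrightarrow> x = bot_s L 0 \<or> x = top_s L 0" for x using two_valued by blast
  have nb: "bot_s L 0 \<noteq> top_s L 0" using top_ne_bot0 by simp
  have hom: "is_hom h L (fo_alg {})"
    unfolding is_hom_def
  proof (intro conjI allI ballI impI)
    fix n
    show "h n (bot_s L n) = bot_s (fo_alg {}) n" using nb by (cases n) (simp_all add: h_def fo_alg_def)
    show "h n (top_s L n) = top_s (fo_alg {}) n" by (simp add: h_def fo_alg_def tE)
    fix x assume x: "x \<in> carr L n"
    have ngt: "neg_s L 0 (top_s L 0) = bot_s L 0" using ba.compl2[OF ba_L, of "top_s L 0" 0] BA(6)[of "neg_s L 0 (top_s L 0)" 0] by simp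
    have ngb: "neg_s L 0 (bot_s L 0) = top_s L 0" using ba.compl1[OF ba_L, of "bot_s L 0" 0] BA(5)[of "neg_s L 0 (bot_s L 0)" 0] by simp
    show "h n (neg_s L n x) = neg_s (fo_alg {}) n (h n x)"
    proof (cases "n = 0")
      case True
      have "x = bot_s L 0 \<or> x = top_s L 0" using h0[of x] x True by simp
      then show ?thesis
      proof (elim disjE)
        assume "x = bot_s L 0" then show ?thesis using True nb ngb by (simp add: h_def fo_alg_def tE)
      next
        assume "x = top_s L 0" then show ?thesis using True nb ngt by (simp add: h_def fo_alg_def tE)
      qed
    qed (simp add: h_def fo_alg_def tE)
    fix y assume y: "y \<in> carr L n"
    have bb: "sup_s L 0 (bot_s L 0) (bot_s L 0) = bot_s L 0" "sup_s L 0 (bot_s L 0) (top_s L 0) = top_s L 0"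
      "sup_s L 0 (top_s L 0) (bot_s L 0) = top_s L 0" "sup_s L 0 (top_s L 0) (top_s L 0) = top_s L 0"
      "inf_s L 0 (bot_s L 0) (bot_s L 0) = bot_s L 0" "inf_s L 0 (bot_s L 0) (top_s L 0) = bot_s L 0"
      "inf_s L 0 (top_s L 0) (bot_s L 0) = bot_s L 0" "inf_s L 0 (top_s L 0) (top_s L 0) = top_s L 0"
      using BA(1)[of "top_s L 0" 0] BA(2)[of "top_s L 0" 0] BA(2)[of "bot_s L 0" 0] BA(27)[of "top_s L 0" 0]
        BA(5)[of "top_s L 0" 0] BA(3)[of "top_s L 0" 0] BA(4)[of "top_s L 0" 0] BA(1)[of "bot_s L 0" 0] by simp_all
    show "h n (sup_s L n x y) = sup_s (fo_alg {}) n (h n x) (h n y)"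
    proof (cases "n = 0")
      case True
      have "x = bot_s L 0 \<or> x = top_s L 0" "y = bot_s L 0 \<or> y = top_s L 0" using h0 x y True by auto
      then show ?thesis using True nb bb by (elim disjE) (simp_all add: h_def fo_alg_def)
    qed (simp add: h_def fo_alg_def)
    show "h n (inf_s L n x y) = inf_s (fo_alg {}) n (h n x) (h n y)"
    proof (cases "n = 0")
      case True
      have "x = bot_s L 0 \<or> x = top_s L 0" "y = bot_s L 0 \<or> y = top_s L 0" using h0 x y True by auto
      then show ?thesis using True nb bb by (elim disjE) (simp_all add: h_def fo_alg_def)
    qed (simp add: h_def fo_alg_def)
  next
    fix n x assume x: "x \<in> carr L (Suc n)"
    show "h n (ex_s L n x) = ex_s (fo_alg {}) (n) (h (Suc n) x)"
      using triv[of "Suc n" x] x nb by (cases n) (simp_all add: h_def fo_alg_def)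
  next
    fix n k \<alpha> x assume s: "subst_sym n k \<alpha>" and x: "x \<in> carr L n"
    show "h k (msubst L k \<alpha> x) = msubst (fo_alg {}) k \<alpha> (h n x)"
    proof (cases "k = 0")
      case True
      then have "\<alpha> = []" "n = 0" using s by (auto simp: subst_sym_def)
      then show ?thesis using True s_id[of x 0] x by (auto simp: h_def fo_alg_def tE)
    qed (simp add: h_def fo_alg_def tE)
  qed
  show ?thesis
  proof (rule iso_from_hom[OF msalg hom])
    show "h n ` carr L n \<subseteq> Pow (tuples {} n)" for n by (auto simp: h_def tE)
    show "inj_on (h n) (carr L n)" for n
    proof (cases "n = 0")
      case True then show ?thesis using h0 nb by (auto simp: inj_on_def h_def)
    next
      case False then show ?thesis unfolding inj_on_def using triv[of n] by (metis neq0_conv)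
    qed
  qed
qed

end

lemma inj_map_tuples: assumes inj: "inj_on f W" shows "inj_on (map f) (tuples W n)"
proof (rule inj_onI)
  fix xs ys assume xs: "xs \<in> tuples W n" and ys: "ys \<in> tuples W n" and e: "map f xs = map f ys"
  have l: "length xs = length ys" using e by (metis length_map)
  show "xs = ys"
  proof (rule nth_equalityI[OF l])
    fix i assume i: "i < length xs"
    have "f (xs ! i) = f (ys ! i)" using e i l by (metis nth_map)
    moreover have "xs ! i \<in> W" "ys ! i \<in> W" using xs ys i l by (auto simp: tuples_def)
    ultimately show "xs ! i = ys ! i" using inj by (auto simp: inj_on_def)
  qed
qed

lemma map_tuples_mem: "xs \<in> tuples W n \<Longrightarrow> map f xs \<in> tuples (f ` W) n"
  unfolding tuples_def by auto

lemma map_tuples: assumes inj: "inj_on f W" shows "map f ` tuples W n = tuples (f ` W) n"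
proof
  show "map f ` tuples W n \<subseteq> tuples (f ` W) n" using map_tuples_mem by blast
  show "tuples (f ` W) n \<subseteq> map f ` tuples W n"
  proof
    fix ys assume ys: "ys \<in> tuples (f ` W) n"
    have "ys = map f (map (inv_into W f) ys)"
      using ys by (auto simp: tuples_def f_inv_into_f intro!: map_idI[symmetric])
    moreover have "map (inv_into W f) ys \<in> tuples W n"
      using ys by (auto simp: tuples_def inv_into_into)
    ultimately show "ys \<in> map f ` tuples W n" by blast
  qed
qed



lemma g_ex: assumes inj: "inj_on f W" and R: "R \<subseteq> tuples W (Suc n)"
  shows "map f ` {xs \<in> tuples W n. \<exists>y\<in>W. xs @ [y] \<in> R} =
         {ys \<in> tuples (f ` W) n. \<exists>y\<in>f ` W. ys @ [y] \<in> map f ` R}"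
proof
  show "map f ` {xs \<in> tuples W n. \<exists>y\<in>W. xs @ [y] \<in> R} \<subseteq> {ys \<in> tuples (f ` W) n. \<exists>y\<in>f ` W. ys @ [y] \<in> map f ` R}"
  proof clarify
    fix xs y assume xs: "xs \<in> tuples W n" and y: "y \<in> W" and r: "xs @ [y] \<in> R"
    have "map f xs @ [f y] \<in> map f ` R" using r by (metis (no_types) image_eqI list.simps(8) list.simps(9) map_append)
    then show "map f xs \<in> tuples (f ` W) n \<and> (\<exists>y\<in>f ` W. map f xs @ [y] \<in> map f ` R)"
      using xs y map_tuples_mem by blast
  qed
  show "{ys \<in> tuples (f ` W) n. \<exists>y\<in>f ` W. ys @ [y] \<in> map f ` R} \<subseteq> map f ` {xs \<in> tuples W n. \<exists>y\<in>W. xs @ [y] \<in> R}"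
  proof clarify
    fix ys y zs assume ys: "ys \<in> tuples (f ` W) n" and y: "y \<in> W" and zs: "zs \<in> R" and e: "ys @ [f y] = map f zs"
    obtain xs where xs: "xs \<in> tuples W n" "ys = map f xs" using ys map_tuples[OF inj] by blast
    have "xs @ [y] \<in> tuples W (Suc n)" using xs y by (auto simp: tuples_def)
    moreover have "map f (xs @ [y]) = map f zs" using e xs by simp
    ultimately have "xs @ [y] = zs" using inj_map_tuples[OF inj] zs R by (auto simp: inj_on_def)
    then show "ys \<in> map f ` {xs \<in> tuples W n. \<exists>y\<in>W. xs @ [y] \<in> R}" using xs y zs by blast
  qed
qed

lemma g_subst: assumes inj: "inj_on f W" and R: "R \<subseteq> tuples W n" and s: "subst_sym n k \<alpha>"
  shows "map f ` {xs \<in> tuples W k. map (nth xs) \<alpha> \<in> R} =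
         {ys \<in> tuples (f ` W) k. map (nth ys) \<alpha> \<in> map f ` R}"
proof -
  have lt: "\<forall>j\<in>set \<alpha>. j < k" and len: "length \<alpha> = n" using s by (auto simp: subst_sym_def)
  have mm: "xs \<in> tuples W k \<Longrightarrow> map (nth (map f xs)) \<alpha> = map f (map (nth xs) \<alpha>)" for xs
    using lt by (auto simp: tuples_def)
  have mt: "xs \<in> tuples W k \<Longrightarrow> map (nth xs) \<alpha> \<in> tuples W n" for xs
    using lt len by (auto simp: tuples_def)
  show ?thesis
  proof
    show "map f ` {xs \<in> tuples W k. map (nth xs) \<alpha> \<in> R} \<subseteq> {ys \<in> tuples (f ` W) k. map (nth ys) \<alpha> \<in> map f ` R}"
      using mm map_tuples_mem by fastforce
    show "{ys \<in> tuples (f ` W) k. map (nth ys) \<alpha> \<in> map f ` R} \<subseteq> map f ` {xs \<in> tuples W k. map (nth xs) \<alpha> \<in> R}"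
    proof clarify
      fix ys zs assume ys: "ys \<in> tuples (f ` W) k" and zs: "zs \<in> R" and e: "map (nth ys) \<alpha> = map f zs"
      obtain xs where xs: "xs \<in> tuples W k" "ys = map f xs" using ys map_tuples[OF inj] by blast
      have "map f (map (nth xs) \<alpha>) = map f zs" using e mm[OF xs(1)] xs by simp
      then have "map (nth xs) \<alpha> = zs" using inj_map_tuples[OF inj] zs R mt[OF xs(1)] by (auto simp: inj_on_def)
      then show "ys \<in> map f ` {xs \<in> tuples W k. map (nth xs) \<alpha> \<in> R}" using xs zs by blast
    qed
  qed
qed

lemma transport:
  assumes ms: "is_msalg L" and inj: "inj_on f W" and iso: "iso_to_subalg_of_fo L W"
  shows "iso_to_subalg_of_fo L (f ` W)"
proof -
  obtain S h where sub: "subalgebra S (fo_alg W)" and bij: "\<And>n. bij_betw (h n) (carr L n) (S n)"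
    and hom: "is_hom h L (fo_alg W)"
    using iso unfolding iso_to_subalg_of_fo_def is_iso_def by (auto simp: is_hom_carr)
  have Ssub: "S n \<subseteq> Pow (tuples W n)" for n using sub by (simp add: subalgebra_def fo_alg_def)
  have hT: "x \<in> carr L n \<Longrightarrow> h n x \<subseteq> tuples W n" for n x
    using bij[of n] Ssub[of n] by (auto simp: bij_betw_def)
  define h' where "h' n x = map f ` h n x" for n x
  have C: "\<forall>n. \<forall>x\<in>carr L n. \<forall>y\<in>carr L n. sup_s L n x y \<in> carr L n \<and> inf_s L n x y \<in> carr L n"
     "\<forall>n. \<forall>x\<in>carr L n. neg_s L n x \<in> carr L n"
    using ms unfolding is_msalg_def by blast+
  have H: "\<forall>n. h n (bot_s L n) = {} \<and> h n (top_s L n) = tuples W n"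
    "\<forall>n. \<forall>x\<in>carr L n. \<forall>y\<in>carr L n. h n (sup_s L n x y) = h n x \<union> h n y \<and> h n (inf_s L n x y) = h n x \<inter> h n y"
    "\<forall>n. \<forall>x\<in>carr L n. h n (neg_s L n x) = tuples W n - h n x"
    "\<forall>n. \<forall>x\<in>carr L (Suc n). h n (ex_s L n x) = {xs \<in> tuples W n. \<exists>y\<in>W. xs @ [y] \<in> h (Suc n) x}"
    "\<forall>n k \<alpha>. subst_sym n k \<alpha> \<longrightarrow> (\<forall>x\<in>carr L n. h k (msubst L k \<alpha> x) = {xs \<in> tuples W k. map (nth xs) \<alpha> \<in> h n x})"
    using hom unfolding is_hom_def fo_alg_def by simp_all
  have hom': "is_hom h' L (fo_alg (f ` W))"
    unfolding is_hom_def
  proof (intro conjI allI ballI impI)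
    fix n
    show "h' n (bot_s L n) = bot_s (fo_alg (f ` W)) n" using H(1) by (simp add: h'_def fo_alg_def)
    show "h' n (top_s L n) = top_s (fo_alg (f ` W)) n" using H(1) map_tuples[OF inj] by (simp add: h'_def fo_alg_def)
    fix x assume x: "x \<in> carr L n"
    show "h' n (neg_s L n x) = neg_s (fo_alg (f ` W)) n (h' n x)"
      using H(3) x inj_on_image_set_diff[OF inj_map_tuples[OF inj, of n], of "tuples W n" "h n x"] hT[OF x] map_tuples[OF inj]
      by (simp add: h'_def fo_alg_def)
    fix y assume y: "y \<in> carr L n"
    show "h' n (sup_s L n x y) = sup_s (fo_alg (f ` W)) n (h' n x) (h' n y)"
      using H(2) x y by (simp add: h'_def fo_alg_def image_Un)
    show "h' n (inf_s L n x y) = inf_s (fo_alg (f ` W)) n (h' n x) (h' n y)"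
      using H(2) x y inj_on_image_Int[OF inj_map_tuples[OF inj, of n] hT[OF x] hT[OF y]]
      by (simp add: h'_def fo_alg_def)
  next
    fix n x assume x: "x \<in> carr L (Suc n)"
    show "h' n (ex_s L n x) = ex_s (fo_alg (f ` W)) n (h' (Suc n) x)"
      using H(4) x g_ex[OF inj hT[OF x]] by (simp add: h'_def fo_alg_def)
  next
    fix n k \<alpha> x assume s: "subst_sym n k \<alpha>" and x: "x \<in> carr L n"
    show "h' k (msubst L k \<alpha> x) = msubst (fo_alg (f ` W)) k \<alpha> (h' n x)"
      using H(5) s x g_subst[OF inj hT[OF x] s] by (simp add: h'_def fo_alg_def)
  qed
  show ?thesis
  proof (rule iso_from_hom[OF ms hom'])
    show "h' n ` carr L n \<subseteq> Pow (tuples (f ` W) n)" for n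
      using hT map_tuples_mem by (fastforce simp: h'_def)
    show "inj_on (h' n) (carr L n)" for n
    proof -
      have i1: "inj_on (h n) (carr L n)" using bij[of n] by (simp add: bij_betw_def)
      have i2: "inj_on ((`) (map f)) (Pow (tuples W n))"
        by (rule inj_on_image) (simp add: inj_map_tuples[OF inj])
      show ?thesis unfolding inj_on_def
      proof (intro ballI impI)
        fix x y assume x: "x \<in> carr L n" and y: "y \<in> carr L n" and e: "h' n x = h' n y"
        have "h n x = h n y" using i2 hT[OF x] hT[OF y] e unfolding h'_def inj_on_def by blast
        then show "x = y" using i1 x y unfolding inj_on_def by blast
      qed
    qed
  qed
qed

lemma inf_np: "\<not> finite (UNIV :: (nat \<times> 'a set) set)"
  by (simp add: finite_prod)
lemma pair_inj: "\<exists>pr :: (nat \<times> 'a set) \<times> (nat \<times> 'a set) \<Rightarrow> nat \<times> 'a set. inj pr"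
proof -
  have "ordLeq3 (card_of ((UNIV :: (nat \<times> 'a set) set) \<times> (UNIV :: (nat \<times> 'a set) set))) (card_of (UNIV :: (nat \<times> 'a set) set))"
    using card_of_Times_same_infinite[OF inf_np] ordIso_iff_ordLeq by auto
  from this[unfolded card_of_ordLeq[symmetric]] obtain f :: "(nat \<times> 'a set) \<times> (nat \<times> 'a set) \<Rightarrow> nat \<times> 'a set"
    where "inj_on f ((UNIV :: (nat \<times> 'a set) set) \<times> (UNIV :: (nat \<times> 'a set) set))" by (elim exE conjE)
  then have "inj f" unfolding UNIV_Times_UNIV .
  then show ?thesis by blast
qed
definition sh :: "nat \<times> 'a set \<Rightarrow> nat \<times> 'a set" where "sh p = (Suc (fst p), snd p)"

definition encL :: "((nat \<times> 'a set) \<times> (nat \<times> 'a set) \<Rightarrow> nat \<times> 'a set) \<Rightarrow> (nat \<times> 'a set) list \<Rightarrow> nat \<times> 'a set" where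
  "encL pr xs = foldr (\<lambda>x acc. sh (pr (x, acc))) xs (0, {})"

fun encT :: "((nat \<times> 'a set) \<times> (nat \<times> 'a set) \<Rightarrow> nat \<times> 'a set) \<Rightarrow> 'a trm \<Rightarrow> nat \<times> 'a set" where
  "encT pr (Eps \<psi> ts) = pr ((0, {\<psi>}), encL pr (map (encT pr) ts))"

lemma encL_inj: "inj pr \<Longrightarrow> encL pr xs = encL pr ys \<Longrightarrow> xs = ys"
proof (induction xs arbitrary: ys)
  case Nil
  then show ?case by (cases ys) (auto simp: encL_def sh_def)
next
  case (Cons a xs)
  then show ?case
  proof (cases ys)
    case Nil then show ?thesis using Cons.prems by (auto simp: encL_def sh_def)
  next
    case (Cons b ys')
    have "sh (pr (a, encL pr xs)) = sh (pr (b, encL pr ys'))" using Cons.prems Cons by (simp add: encL_def)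
    then have "pr (a, encL pr xs) = pr (b, encL pr ys')" by (auto simp: sh_def prod_eq_iff)
    then have "a = b" "encL pr xs = encL pr ys'" using Cons.prems(1) by (auto dest: injD)
    then show ?thesis using Cons.IH[OF Cons.prems(1)] Cons by simp
  qed
qed

lemma encT_inj: assumes pr: "inj pr" shows "inj (encT pr)"
proof -
  have "\<forall>t2. encT pr t1 = encT pr t2 \<longrightarrow> t1 = t2" for t1
  proof (induction t1)
    case (Eps \<psi> ts)
    show ?case
    proof (intro allI impI)
      fix t2 assume e: "encT pr (Eps \<psi> ts) = encT pr t2"
      obtain \<psi>' ts' where t2: "t2 = Eps \<psi>' ts'" by (cases t2)
      have "((0::nat, {\<psi>}), encL pr (map (encT pr) ts)) = ((0, {\<psi>'}), encL pr (map (encT pr) ts'))"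
        using e t2 pr by (auto dest: injD)
      then have p: "\<psi> = \<psi>'" and m: "map (encT pr) ts = map (encT pr) ts'"
        using encL_inj[OF pr] by auto
      have "ts = ts'"
        using m Eps.IH by (metis list.inj_map_strong)
      then show "Eps \<psi> ts = t2" using p t2 by simp
    qed
  qed
  then show ?thesis by (auto intro: injI)
qed

lemma trm_enc: "\<exists>f :: 'a trm \<Rightarrow> nat \<times> 'a set. inj f"
  using pair_inj encT_inj by blast

lemma map_nth_cyl: "n \<le> length xs \<Longrightarrow> map (nth xs) (cyl n) = take n xs"
  by (rule nth_equalityI) (auto simp: cyl_def)

lemma map_nth_app_cyl: "length xs = n \<Longrightarrow> map (nth (xs @ [y])) (cyl n) = xs"
  by (rule nth_equalityI) (auto simp: cyl_def nth_append)

lemma tuples_Suc: "zs \<in> tuples W (Suc n) \<longleftrightarrow> (\<exists>xs y. zs = xs @ [y] \<and> xs \<in> tuples W n \<and> y \<in> W)"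
proof
  assume z: "zs \<in> tuples W (Suc n)"
  then have "zs \<noteq> []" by (auto simp: tuples_def)
  then have "zs = butlast zs @ [last zs]" by simp
  moreover have "butlast zs \<in> tuples W n" using z by (auto simp: tuples_def dest: in_set_butlastD)
  moreover have "last zs \<in> set zs" using \<open>zs \<noteq> []\<close> by (rule last_in_set)
  then have "last zs \<in> W" using z by (auto simp: tuples_def)
  ultimately show "\<exists>xs y. zs = xs @ [y] \<and> xs \<in> tuples W n \<and> y \<in> W" by blast
qed (auto simp: tuples_def)

lemma map_nth_tuples: "xs \<in> tuples W k \<Longrightarrow> subst_sym n k \<alpha> \<Longrightarrow> map (nth xs) \<alpha> \<in> tuples W n"
  by (auto simp: tuples_def subst_sym_def)

locale sound =
  fixes L :: "'a msalg" and W :: "'w set" and S h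
  assumes ms: "is_msalg L" and sub: "subalgebra S (fo_alg W)"
    and bij: "\<And>n. bij_betw (h n) (carr L n) (S n)" and hom: "is_hom h L (fo_alg W)"
begin

lemma bot_C[simp]: "bot_s L n \<in> carr L n" and top_C[simp]: "top_s L n \<in> carr L n"
  using ms by (auto simp: is_msalg_def)
lemma inf_C[simp]: "x \<in> carr L n \<Longrightarrow> y \<in> carr L n \<Longrightarrow> inf_s L n x y \<in> carr L n"
  and sup_C[simp]: "x \<in> carr L n \<Longrightarrow> y \<in> carr L n \<Longrightarrow> sup_s L n x y \<in> carr L n"
  and neg_C[simp]: "x \<in> carr L n \<Longrightarrow> neg_s L n x \<in> carr L n"
  and ex_C[simp]: "x \<in> carr L (Suc n) \<Longrightarrow> ex_s L n x \<in> carr L n"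
  using ms by (auto simp: is_msalg_def)
lemma subst_C: "subst_sym n k \<alpha> \<Longrightarrow> x \<in> carr L n \<Longrightarrow> msubst L k \<alpha> x \<in> carr L k"
  using ms by (auto simp: is_msalg_def)

lemma HT: assumes x: "x \<in> carr L n" shows "h n x \<subseteq> tuples W n"
proof -
  have "h n x \<in> S n" using bij[of n] x by (auto simp: bij_betw_def)
  moreover have "S n \<subseteq> Pow (tuples W n)" using sub by (simp add: subalgebra_def fo_alg_def)
  ultimately show ?thesis by blast
qed

lemma Hinj: "x \<in> carr L n \<Longrightarrow> y \<in> carr L n \<Longrightarrow> h n x = h n y \<Longrightarrow> x = y"
  using bij[of n] by (auto simp: bij_betw_def inj_on_def)

lemma Hb[simp]: "h n (bot_s L n) = {}" and Ht[simp]: "h n (top_s L n) = tuples W n"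
  using hom by (simp_all add: is_hom_def fo_alg_def)
lemma Hs[simp]: "x \<in> carr L n \<Longrightarrow> y \<in> carr L n \<Longrightarrow> h n (sup_s L n x y) = h n x \<union> h n y"
  and Hi[simp]: "x \<in> carr L n \<Longrightarrow> y \<in> carr L n \<Longrightarrow> h n (inf_s L n x y) = h n x \<inter> h n y"
  using hom by (simp_all add: is_hom_def fo_alg_def)
lemma Hn[simp]: "x \<in> carr L n \<Longrightarrow> h n (neg_s L n x) = tuples W n - h n x"
  using hom by (simp add: is_hom_def fo_alg_def)
lemma He[simp]: "x \<in> carr L (Suc n) \<Longrightarrow> h n (ex_s L n x) = {xs \<in> tuples W n. \<exists>y\<in>W. xs @ [y] \<in> h (Suc n) x}"
  using hom by (simp add: is_hom_def fo_alg_def)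
lemma Hsub: "subst_sym n k \<alpha> \<Longrightarrow> x \<in> carr L n \<Longrightarrow> h k (msubst L k \<alpha> x) = {xs \<in> tuples W k. map (nth xs) \<alpha> \<in> h n x}"
  using hom by (simp add: is_hom_def fo_alg_def)

lemma Hle: "x \<in> carr L n \<Longrightarrow> y \<in> carr L n \<Longrightarrow> le_s L n x y \<longleftrightarrow> h n x \<subseteq> h n y"
proof -
  assume x: "x \<in> carr L n" and y: "y \<in> carr L n"
  have "x = inf_s L n x y \<longleftrightarrow> h n x = h n (inf_s L n x y)"
  proof
    assume "x = inf_s L n x y" then show "h n x = h n (inf_s L n x y)" by (rule arg_cong)
  next
    assume "h n x = h n (inf_s L n x y)" then show "x = inf_s L n x y" using Hinj[of x n "inf_s L n x y"] x y by simp
  qed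
  also have "\<dots> \<longleftrightarrow> h n x \<subseteq> h n y" using x y by auto
  finally show ?thesis by (simp add: le_s_def)
qed

lemma bi_C: "set xs \<subseteq> carr L n \<Longrightarrow> big_inf L n xs \<in> carr L n"
  by (induction xs) (auto simp: big_inf_def)
lemma bs_C: "set xs \<subseteq> carr L n \<Longrightarrow> big_sup L n xs \<in> carr L n"
  by (induction xs) (auto simp: big_sup_def)
lemma Hbi: "set xs \<subseteq> carr L n \<Longrightarrow> h n (big_inf L n xs) = tuples W n \<inter> (\<Inter>x\<in>set xs. h n x)"
proof (induction xs)
  case (Cons a xs)
  then have "big_inf L n xs \<in> carr L n" using bi_C by auto
  then show ?case using Cons HT[of a n] by (auto simp: big_inf_def)
qed (simp add: big_inf_def)
lemma Hbs: "set xs \<subseteq> carr L n \<Longrightarrow> h n (big_sup L n xs) = (\<Union>x\<in>set xs. h n x)"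
proof (induction xs)
  case (Cons a xs)
  then have "big_sup L n xs \<in> carr L n" using bs_C by auto
  then show ?case using Cons by (auto simp: big_sup_def)
qed (simp add: big_sup_def)

lemma ex_iter_C: "x \<in> carr L (m + n) \<Longrightarrow> ex_iter L m n x \<in> carr L m"
  by (induction n arbitrary: x) auto

lemma tuples0: "tuples W 0 = {[]}" by (auto simp: tuples_def)

lemma Hex_iter: "x \<in> carr L (m + n) \<Longrightarrow>
   h m (ex_iter L m n x) = {xs \<in> tuples W m. \<exists>ys\<in>tuples W n. xs @ ys \<in> h (m + n) x}"
proof (induction n arbitrary: x)
  case 0
  then show ?case using HT[of x m] by (auto simp: tuples0)
next
  case (Suc n)
  have xC: "x \<in> carr L (Suc (m + n))" using Suc.prems by simp
  have eC: "ex_s L (m + n) x \<in> carr L (m + n)" using xC by simp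
  have IH: "h m (ex_iter L m (Suc n) x) = {xs \<in> tuples W m. \<exists>ys\<in>tuples W n. xs @ ys \<in> h (m + n) (ex_s L (m + n) x)}"
    using Suc.IH[OF eC] by simp
  have HE: "h (m + n) (ex_s L (m + n) x) = {xs \<in> tuples W (m + n). \<exists>y\<in>W. xs @ [y] \<in> h (Suc (m + n)) x}"
    by (rule He[OF xC])
  show ?case
  proof (rule set_eqI)
    fix xs
    show "xs \<in> h m (ex_iter L m (Suc n) x) \<longleftrightarrow> xs \<in> {xs \<in> tuples W m. \<exists>ys\<in>tuples W (Suc n). xs @ ys \<in> h (m + Suc n) x}"
    proof
      assume "xs \<in> h m (ex_iter L m (Suc n) x)"
      then obtain ys where xs: "xs \<in> tuples W m" and ys: "ys \<in> tuples W n"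
        and i: "xs @ ys \<in> h (m + n) (ex_s L (m + n) x)" unfolding IH by blast
      from i obtain y where y: "y \<in> W" and j: "(xs @ ys) @ [y] \<in> h (Suc (m + n)) x" unfolding HE by blast
      have "ys @ [y] \<in> tuples W (Suc n)" using ys y by (auto simp: tuples_def)
      moreover have "xs @ (ys @ [y]) \<in> h (m + Suc n) x" using j by simp
      ultimately show "xs \<in> {xs \<in> tuples W m. \<exists>ys\<in>tuples W (Suc n). xs @ ys \<in> h (m + Suc n) x}"
        using xs by blast
    next
      assume "xs \<in> {xs \<in> tuples W m. \<exists>ys\<in>tuples W (Suc n). xs @ ys \<in> h (m + Suc n) x}"
      then obtain zs where xs: "xs \<in> tuples W m" and zs: "zs \<in> tuples W (Suc n)"
        and i: "xs @ zs \<in> h (m + Suc n) x" by blast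
      obtain ys y where e: "zs = ys @ [y]" "ys \<in> tuples W n" "y \<in> W"
        using tuples_Suc[THEN iffD1, OF zs] by (elim exE conjE) simp
      have t: "xs @ ys \<in> tuples W (m + n)" using xs e(2) unfolding tuples_def by simp
      have "(xs @ ys) @ [y] \<in> h (Suc (m + n)) x" using i e by simp
      then have "xs @ ys \<in> h (m + n) (ex_s L (m + n) x)" unfolding HE using t e by blast
      then show "xs \<in> h m (ex_iter L m (Suc n) x)" unfolding IH using xs e by blast
    qed
  qed
qed

end

context sound
begin

lemma s_ax1: "ax1 L"
  unfolding ax1_def
proof (intro allI ballI conjI)
  fix n x y z assume x: "x \<in> carr L n" and y: "y \<in> carr L n" and z: "z \<in> carr L n"
  note T = HT[OF x] HT[OF y] HT[OF z]
  show "sup_s L n (sup_s L n x y) z = sup_s L n x (sup_s L n y z)" by (rule Hinj[where n=n]) (use x y z in \<open>simp_all add: Un_assoc\<close>)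
  show "inf_s L n (inf_s L n x y) z = inf_s L n x (inf_s L n y z)" by (rule Hinj[where n=n]) (use x y z in \<open>simp_all add: Int_assoc\<close>)
  show "sup_s L n x y = sup_s L n y x" by (rule Hinj[where n=n]) (use x y z in \<open>simp_all add: Un_commute\<close>)
  show "inf_s L n x y = inf_s L n y x" by (rule Hinj[where n=n]) (use x y z in \<open>simp_all add: Int_commute\<close>)
  show "sup_s L n x (inf_s L n x y) = x" by (rule Hinj[where n=n]) (use x y z in \<open>simp_all add: Un_Int_eq\<close>)
  show "inf_s L n x (sup_s L n x y) = x" by (rule Hinj[where n=n]) (use x y z in \<open>simp_all add: Int_Un_eq\<close>)
  show "inf_s L n x (sup_s L n y z) = sup_s L n (inf_s L n x y) (inf_s L n x z)"
    by (rule Hinj[where n=n]) (use x y z in \<open>simp_all add: Int_Un_distrib\<close>)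
  show "sup_s L n x (bot_s L n) = x" by (rule Hinj[where n=n]) (use x in simp_all)
  show "inf_s L n x (top_s L n) = x" by (rule Hinj[where n=n]) (use x T in \<open>simp_all add: Int_absorb2\<close>)
qed

lemma s_ax2: "ax2 L"
  unfolding ax2_def
proof (intro allI impI ballI conjI)
  fix n k \<alpha> assume s: "subst_sym n k \<alpha>"
  show "msubst L k \<alpha> (bot_s L n) = bot_s L k"
    by (rule Hinj[where n=k]) (use s subst_C[OF s] Hsub[OF s] in simp_all)
  show "msubst L k \<alpha> (top_s L n) = top_s L k"
    by (rule Hinj[where n=k]) (use s subst_C[OF s] Hsub[OF s] map_nth_tuples in auto)
  fix x y assume x: "x \<in> carr L n" and y: "y \<in> carr L n"
  show "msubst L k \<alpha> (sup_s L n x y) = sup_s L k (msubst L k \<alpha> x) (msubst L k \<alpha> y)"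
    by (rule Hinj[where n=k]) (use x y subst_C[OF s] Hsub[OF s] in auto)
  show "msubst L k \<alpha> (inf_s L n x y) = inf_s L k (msubst L k \<alpha> x) (msubst L k \<alpha> y)"
    by (rule Hinj[where n=k]) (use x y subst_C[OF s] Hsub[OF s] in auto)
qed

lemma s_ax3: "ax3 L"
  unfolding ax3_def
proof (intro allI impI ballI)
  fix k n m \<alpha> \<beta> r assume st: "subst_sym k n \<alpha> \<and> subst_sym n m \<beta>" and r: "r \<in> carr L k"
  have sa: "subst_sym k n \<alpha>" and sb: "subst_sym n m \<beta>" using st by auto
  have sab: "subst_sym k m (map (nth \<beta>) \<alpha>)" using sa sb by (auto simp: subst_sym_def)
  have mm: "map (nth (map (nth xs) \<beta>)) \<alpha> = map ((!) xs \<circ> (!) \<beta>) \<alpha>" for xs :: "'w list"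
    using sa sb by (auto simp: subst_sym_def)
  have "h m (msubst L m (map (nth \<beta>) \<alpha>) r) = h m (msubst L m \<beta> (msubst L n \<alpha> r))"
    using Hsub[OF sab r] Hsub[OF sb subst_C[OF sa r]] Hsub[OF sa r] map_nth_tuples[OF _ sb] by (auto simp: mm)
  then show "msubst L m (map (nth \<beta>) \<alpha>) r = msubst L m \<beta> (msubst L n \<alpha> r)"
    using Hinj subst_C[OF sab r] subst_C[OF sb subst_C[OF sa r]] by blast
qed

lemma s_ax4: "ax4 L"
  unfolding ax4_def
proof (intro allI ballI)
  fix n r assume r: "r \<in> carr L n"
  have s: "subst_sym n n [0..<n]" by (simp add: subst_sym_def)
  have "h n (msubst L n [0..<n] r) = h n r"
    using Hsub[OF s r] HT[OF r] by (auto simp: tuples_def map_nth)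
  then show "msubst L n [0..<n] r = r" using Hinj subst_C[OF s r] r by blast
qed

lemma s_ax5: "ax5 L"
  unfolding ax5_def
proof (intro allI impI ballI)
  fix n k \<alpha> r assume s: "subst_sym n k \<alpha>" and r: "r \<in> carr L n"
  have "h k (msubst L k \<alpha> (neg_s L n r)) = h k (neg_s L k (msubst L k \<alpha> r))"
    using Hsub[OF s] r subst_C[OF s r] map_nth_tuples[OF _ s] by auto
  then show "msubst L k \<alpha> (neg_s L n r) = neg_s L k (msubst L k \<alpha> r)"
    using Hinj subst_C[OF s] r by (metis neg_C)
qed

lemma s_ax6: "ax6 L"
  unfolding ax6_def
proof (intro allI ballI conjI)
  fix n r assume r: "r \<in> carr L n"
  show "sup_s L n r (neg_s L n r) = top_s L n" by (rule Hinj[where n=n]) (use r HT[OF r] in auto)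
  show "inf_s L n r (neg_s L n r) = bot_s L n" by (rule Hinj[where n=n]) (use r HT[OF r] in auto)
qed

lemma s_ax7: "ax7 L"
  unfolding ax7_def
proof (intro allI ballI conjI)
  fix n
  show "ex_s L n (bot_s L (Suc n)) = bot_s L n" by (rule Hinj[where n=n]) simp_all
  fix r s assume r: "r \<in> carr L (Suc n)" and s: "s \<in> carr L (Suc n)"
  show "ex_s L n (sup_s L (Suc n) r s) = sup_s L n (ex_s L n r) (ex_s L n s)"
    by (rule Hinj[where n=n]) (use r s in auto)
qed

lemma s_ax8: "ax8 L"
  unfolding ax8_def
proof (intro allI ballI)
  fix n r assume r: "r \<in> carr L (Suc n)"
  have sc: "subst_sym n (Suc n) (cyl n)" by (rule subst_sym_cyl)
  have "h (Suc n) r \<subseteq> h (Suc n) (msubst L (Suc n) (cyl n) (ex_s L n r))"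
  proof
    fix zs assume z: "zs \<in> h (Suc n) r"
    have zt: "zs \<in> tuples W (Suc n)" using HT[OF r] z by blast
    obtain xs y where e: "zs = xs @ [y]" "xs \<in> tuples W n" "y \<in> W"
      using tuples_Suc[THEN iffD1, OF zt] by (elim exE conjE) simp
    have "map (nth zs) (cyl n) = xs" using e by (simp add: map_nth_app_cyl tuples_def)
    then show "zs \<in> h (Suc n) (msubst L (Suc n) (cyl n) (ex_s L n r))"
      using Hsub[OF sc] r e z zt by auto
  qed
  then show "le_s L (Suc n) r (msubst L (Suc n) (cyl n) (ex_s L n r))"
    using Hle r subst_C[OF sc] by simp
qed

lemma s_ax9: "ax9 L"
  unfolding ax9_def
proof (intro allI ballI)
  fix n r s assume r: "r \<in> carr L (Suc n)" and s: "s \<in> carr L n"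
  have sc: "subst_sym n (Suc n) (cyl n)" by (rule subst_sym_cyl)
  have cC: "msubst L (Suc n) (cyl n) s \<in> carr L (Suc n)" by (rule subst_C[OF sc s])
  have mc: "xs \<in> tuples W n \<Longrightarrow> map (nth (xs @ [y])) (cyl n) = xs" for xs y
    by (simp add: map_nth_app_cyl tuples_def)
  have tS: "xs \<in> tuples W n \<Longrightarrow> y \<in> W \<Longrightarrow> xs @ [y] \<in> tuples W (Suc n)" for xs y
    by (auto simp: tuples_def)
  have "h n (ex_s L n (inf_s L (Suc n) r (msubst L (Suc n) (cyl n) s))) = h n (inf_s L n (ex_s L n r) s)"
    using r s cC Hsub[OF sc s] mc tS HT[OF s] by auto
  then show "ex_s L n (inf_s L (Suc n) r (msubst L (Suc n) (cyl n) s)) = inf_s L n (ex_s L n r) s"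
    using Hinj r s cC by (metis ex_C inf_C)
qed

end

lemma sum_take_le: "sum_list (take j (ks :: nat list)) \<le> sum_list ks"
proof -
  have "sum_list ks = sum_list (take j ks) + sum_list (drop j ks)"
    by (metis append_take_drop_id sum_list_append)
  then show ?thesis by simp
qed

lemma part_cyl_sym: assumes i: "i < length ks" shows "subst_sym (ks ! i) (sum_list ks) (part_cyl ks i)"
proof -
  have "sum_list (take i ks) + ks ! i = sum_list (take (Suc i) ks)"
    using i by (simp add: take_Suc_conv_app_nth)
  also have "\<dots> \<le> sum_list ks" by (rule sum_take_le)
  finally show ?thesis by (auto simp: subst_sym_def part_cyl_def)
qed

lemma concat_part:
  assumes l: "length ts = length ks" and lj: "\<forall>j<length ks. length (ts ! j) = ks ! j" and i: "i < length ks"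
  shows "map (nth (concat ts)) (part_cyl ks i) = ts ! i"
proof -
  have mk: "map length ts = ks" using l lj by (intro nth_equalityI) auto
  have it: "i < length ts" using i l by simp
  have e: "concat ts = concat (take i ts) @ (ts ! i @ concat (drop (Suc i) ts))"
    using id_take_nth_drop[OF it] by (metis concat.simps(2) concat_append)
  have la: "length (concat (take i ts)) = sum_list (take i ks)"
    by (simp add: length_concat take_map[symmetric] mk)
  show ?thesis
  proof (rule nth_equalityI)
    show "length (map (nth (concat ts)) (part_cyl ks i)) = length (ts ! i)"
      using lj i by (simp add: part_cyl_def)
    fix l assume "l < length (map (nth (concat ts)) (part_cyl ks i))"
    then have ll: "l < ks ! i" by (simp add: part_cyl_def)
    then have "l < length (ts ! i)" using lj i by simp
    then show "map (nth (concat ts)) (part_cyl ks i) ! l = ts ! i ! l"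
      using ll by (simp add: part_cyl_def e nth_append la)
  qed
qed

context sound
begin

lemma Hbi_map: assumes f: "\<forall>i<n. f i \<in> carr L N"
  shows "zs \<in> h N (big_inf L N (map f [0..<n])) \<longleftrightarrow> zs \<in> tuples W N \<and> (\<forall>i<n. zs \<in> h N (f i))"
proof -
  have "set (map f [0..<n]) \<subseteq> carr L N" using f by auto
  then show ?thesis using Hbi by auto
qed

lemma Hbs_map: assumes f: "\<forall>i<n. f i \<in> carr L N"
  shows "zs \<in> h N (big_sup L N (map f [0..<n])) \<longleftrightarrow> (\<exists>i<n. zs \<in> h N (f i))"
proof -
  have "set (map f [0..<n]) \<subseteq> carr L N" using f by auto
  then show ?thesis using Hbs by auto
qed

lemma s_ax0: "ax0 L"
  unfolding ax0_def
proof (intro allI impI)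
  fix ks rs ss
  assume A: "length rs = length ks \<and> length ss = length ks \<and> (\<forall>i<length ks. rs ! i \<in> carr L (ks ! i) \<and> ss ! i \<in> carr L (ks ! i))"
  assume P: "le_s L (sum_list ks)
        (big_inf L (sum_list ks) (map (\<lambda>i. msubst L (sum_list ks) (part_cyl ks i) (rs ! i)) [0..<length ks]))
        (big_sup L (sum_list ks) (map (\<lambda>i. msubst L (sum_list ks) (part_cyl ks i) (ss ! i)) [0..<length ks]))"
  define N where "N = sum_list ks"
  define n where "n = length ks"
  have rC: "\<forall>i<n. rs ! i \<in> carr L (ks ! i)" and sC: "\<forall>i<n. ss ! i \<in> carr L (ks ! i)" using A by (auto simp: n_def)
  have fr: "\<forall>i<n. msubst L N (part_cyl ks i) (rs ! i) \<in> carr L N"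
    using rC by (auto simp: n_def N_def intro: subst_C[OF part_cyl_sym])
  have fs: "\<forall>i<n. msubst L N (part_cyl ks i) (ss ! i) \<in> carr L N"
    using sC by (auto simp: n_def N_def intro: subst_C[OF part_cyl_sym])
  have sub: "h N (big_inf L N (map (\<lambda>i. msubst L N (part_cyl ks i) (rs ! i)) [0..<n])) \<subseteq>
             h N (big_sup L N (map (\<lambda>i. msubst L N (part_cyl ks i) (ss ! i)) [0..<n]))"
  proof -
    have BIC: "big_inf L N (map (\<lambda>i. msubst L N (part_cyl ks i) (rs ! i)) [0..<n]) \<in> carr L N"
      using fr by (intro bi_C) auto
    have BSC: "big_sup L N (map (\<lambda>i. msubst L N (part_cyl ks i) (ss ! i)) [0..<n]) \<in> carr L N"
      using fs by (intro bs_C) auto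
    have P': "le_s L N (big_inf L N (map (\<lambda>i. msubst L N (part_cyl ks i) (rs ! i)) [0..<n]))
        (big_sup L N (map (\<lambda>i. msubst L N (part_cyl ks i) (ss ! i)) [0..<n]))"
      using P by (simp add: N_def n_def)
    show ?thesis using Hle[OF BIC BSC] P' by simp
  qed
  show "\<exists>i<length ks. le_s L (ks ! i) (rs ! i) (ss ! i)"
  proof (rule ccontr)
    assume "\<not> ?thesis"
    then have nle: "\<forall>i<n. \<not> h (ks ! i) (rs ! i) \<subseteq> h (ks ! i) (ss ! i)"
      using Hle rC sC by (auto simp: n_def)
    define t where "t i = (SOME z. z \<in> h (ks ! i) (rs ! i) \<and> z \<notin> h (ks ! i) (ss ! i))" for i
    have t: "t i \<in> h (ks ! i) (rs ! i) \<and> t i \<notin> h (ks ! i) (ss ! i)" if "i < n" for i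
    proof -
      have "\<exists>z. z \<in> h (ks ! i) (rs ! i) \<and> z \<notin> h (ks ! i) (ss ! i)" using nle that by (simp add: subset_iff)
      then show ?thesis unfolding t_def by (rule someI_ex)
    qed
    have tT: "t i \<in> tuples W (ks ! i)" if "i < n" for i
    proof -
      have "t i \<in> h (ks ! i) (rs ! i)" using t[OF that] by simp
      moreover have "rs ! i \<in> carr L (ks ! i)" using rC that by simp
      ultimately show ?thesis using HT by blast
    qed
    define ts where "ts = map t [0..<n]"
    have lts: "length ts = length ks" by (simp add: ts_def n_def)
    have lj: "\<forall>j<length ks. length (ts ! j) = ks ! j" using tT by (auto simp: ts_def n_def tuples_def)
    have cp: "map (nth (concat ts)) (part_cyl ks i) = t i" if "i < n" for i
      using concat_part[OF lts lj, of i] that by (simp add: ts_def n_def)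
    have cT: "concat ts \<in> tuples W N"
    proof -
      have "length (concat ts) = sum_list (map length ts)" by (simp add: length_concat)
      also have "map length ts = ks" using lts lj by (intro nth_equalityI) auto
      finally have "length (concat ts) = N" by (simp add: N_def)
      moreover have "set (concat ts) \<subseteq> W"
      proof
        fix x assume "x \<in> set (concat ts)"
        then obtain a where a: "a < n" "x \<in> set (t a)" by (auto simp: ts_def)
        then show "x \<in> W" using tT[OF a(1)] by (auto simp: tuples_def)
      qed
      ultimately show ?thesis by (simp add: tuples_def)
    qed
    have "concat ts \<in> h N (big_inf L N (map (\<lambda>i. msubst L N (part_cyl ks i) (rs ! i)) [0..<n]))"
      unfolding Hbi_map[OF fr]
    proof (intro conjI allI impI)
      show "concat ts \<in> tuples W N" by (rule cT)
    next
      fix i assume i: "i < n"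
      have s: "subst_sym (ks ! i) N (part_cyl ks i)" using part_cyl_sym i by (simp add: n_def N_def)
      show "concat ts \<in> h N (msubst L N (part_cyl ks i) (rs ! i))"
        using Hsub[OF s] rC i cT cp t by auto
    qed
    then have "concat ts \<in> h N (big_sup L N (map (\<lambda>i. msubst L N (part_cyl ks i) (ss ! i)) [0..<n]))"
      using sub by blast
    then obtain i where i: "i < n" and m: "concat ts \<in> h N (msubst L N (part_cyl ks i) (ss ! i))"
      unfolding Hbs_map[OF fs] by blast
    have s: "subst_sym (ks ! i) N (part_cyl ks i)" using part_cyl_sym i by (simp add: n_def N_def)
    have "t i \<in> h (ks ! i) (ss ! i)" using m Hsub[OF s] sC i cp by auto
    then show False using t[OF i] by blast
  qed
qed

end

lemma map_nth_app2: "set A \<subseteq> {..<length xs} \<Longrightarrow> i < length ys \<Longrightarrow>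
   map (nth (xs @ ys)) (A @ [length xs + i]) = map (nth xs) A @ [ys ! i]"
  by (auto simp: nth_append subset_iff)

context sound
begin

lemma s_ax10: "ax10 L"
  unfolding ax10_def
proof (intro allI impI)
  fix m and alphas :: "nat list list" and rs
  assume A: "length rs = length alphas \<and> (\<forall>i<length alphas. (\<forall>j\<in>set (alphas ! i). j < m) \<and>
                          rs ! i \<in> carr L (Suc (length (alphas ! i))))"
  define n where "n = length alphas"
  have aM: "\<forall>i<n. set (alphas ! i) \<subseteq> {..<m}" using A by (auto simp: n_def)
  have rC: "\<forall>i<n. rs ! i \<in> carr L (Suc (length (alphas ! i)))" using A by (auto simp: n_def)
  have sb: "subst_sym (Suc (length (alphas ! i))) (m + n) (alphas ! i @ [m + i])" if "i < n" for i
  proof -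
    have "\<forall>j\<in>set (alphas ! i). j < m" using aM that by blast
    then show ?thesis using that by (auto simp: subst_sym_def)
  qed
  have sa: "subst_sym (length (alphas ! i)) m (alphas ! i)" if "i < n" for i
    using aM that by (auto simp: subst_sym_def)
  define F where "F i = msubst L (m + n) (alphas ! i @ [m + i]) (rs ! i)" for i
  define G where "G i = msubst L m (alphas ! i) (ex_s L (length (alphas ! i)) (rs ! i))" for i
  have FC: "\<forall>i<n. F i \<in> carr L (m + n)" using sb rC subst_C unfolding F_def by blast
  have GC: "\<forall>i<n. G i \<in> carr L m"
  proof (intro allI impI)
    fix i assume i: "i < n"
    show "G i \<in> carr L m" unfolding G_def using subst_C[OF sa[OF i] ex_C[OF rC[rule_format, OF i]]] .
  qed
  define X where "X = big_inf L (m + n) (map F [0..<n])"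
  define Y where "Y = big_inf L m (map G [0..<n])"
  have XC: "X \<in> carr L (m + n)" unfolding X_def using FC by (intro bi_C) auto
  have YC: "Y \<in> carr L m" unfolding Y_def using GC by (intro bi_C) auto
  have eC: "ex_iter L m n X \<in> carr L m" by (rule ex_iter_C[OF XC])
  have key: "h m (ex_iter L m n X) = h m Y"
  proof (rule set_eqI)
    fix xs
    show "xs \<in> h m (ex_iter L m n X) \<longleftrightarrow> xs \<in> h m Y"
    proof
      assume "xs \<in> h m (ex_iter L m n X)"
      then obtain ys where xs: "xs \<in> tuples W m" and ys: "ys \<in> tuples W n" and z: "xs @ ys \<in> h (m + n) X"
        using Hex_iter[OF XC] by blast
      have zi: "xs @ ys \<in> h (m + n) (F i)" if "i < n" for i using z that unfolding X_def Hbi_map[OF FC] by blast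
      show "xs \<in> h m Y" unfolding Y_def Hbi_map[OF GC]
      proof (intro conjI allI impI xs)
        fix i assume i: "i < n"
        have lx: "length xs = m" and ly: "length ys = n" using xs ys by (auto simp: tuples_def)
        have eqm: "map (nth (xs @ ys)) (alphas ! i @ [m + i]) = map (nth xs) (alphas ! i) @ [ys ! i]"
          using map_nth_app2[of "alphas ! i" xs i ys] aM i lx ly by simp
        have "map (nth (xs @ ys)) (alphas ! i @ [m + i]) \<in> h (Suc (length (alphas ! i))) (rs ! i)"
          using zi[OF i] unfolding F_def Hsub[OF sb[OF i] rC[rule_format, OF i]] by blast
        then have mem: "map (nth xs) (alphas ! i) @ [ys ! i] \<in> h (Suc (length (alphas ! i))) (rs ! i)"
          unfolding eqm .
        have yW: "ys ! i \<in> W" using ys i by (auto simp: tuples_def)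
        have mt: "map (nth xs) (alphas ! i) \<in> tuples W (length (alphas ! i))"
          using map_nth_tuples[OF xs sa[OF i]] .
        show "xs \<in> h m (G i)" unfolding G_def Hsub[OF sa[OF i] ex_C[OF rC[rule_format, OF i]]]
          using xs mem yW mt He[OF rC[rule_format, OF i]] by auto
      qed
    next
      assume "xs \<in> h m Y"
      then have xs: "xs \<in> tuples W m" and gi: "\<forall>i<n. xs \<in> h m (G i)" unfolding Y_def Hbi_map[OF GC] by auto
      have ex: "\<exists>y\<in>W. map (nth xs) (alphas ! i) @ [y] \<in> h (Suc (length (alphas ! i))) (rs ! i)" if i: "i < n" for i
      proof -
        have "xs \<in> h m (G i)" using gi i by blast
        then have "map (nth xs) (alphas ! i) \<in> h (length (alphas ! i)) (ex_s L (length (alphas ! i)) (rs ! i))"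
          unfolding G_def Hsub[OF sa[OF i] ex_C[OF rC[rule_format, OF i]]] by blast
        then show ?thesis using He[OF rC[rule_format, OF i]] by blast
      qed
      define ys where "ys = map (\<lambda>i. SOME y. y \<in> W \<and> map (nth xs) (alphas ! i) @ [y] \<in> h (Suc (length (alphas ! i))) (rs ! i)) [0..<n]"
      have ysi: "ys ! i \<in> W \<and> map (nth xs) (alphas ! i) @ [ys ! i] \<in> h (Suc (length (alphas ! i))) (rs ! i)" if i: "i < n" for i
      proof -
        have "\<exists>y. y \<in> W \<and> map (nth xs) (alphas ! i) @ [y] \<in> h (Suc (length (alphas ! i))) (rs ! i)" using ex[OF i] by blast
        note S = someI_ex[OF this]
        have "ys ! i = (SOME y. y \<in> W \<and> map (nth xs) (alphas ! i) @ [y] \<in> h (Suc (length (alphas ! i))) (rs ! i))"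
          using i by (simp add: ys_def)
        then show ?thesis using S by simp
      qed
      have ly: "length ys = n" by (simp add: ys_def)
      have ys: "ys \<in> tuples W n"
      proof -
        have "set ys \<subseteq> W"
        proof
          fix y assume "y \<in> set ys"
          then obtain i where "i < n" "y = ys ! i" using ly by (metis in_set_conv_nth)
          then show "y \<in> W" using ysi by blast
        qed
        then show ?thesis using ly by (simp add: tuples_def)
      qed
      have lx: "length xs = m" using xs by (simp add: tuples_def)
      have zT: "xs @ ys \<in> tuples W (m + n)" using xs ys by (auto simp: tuples_def)
      have "xs @ ys \<in> h (m + n) X" unfolding X_def Hbi_map[OF FC]
      proof (intro conjI allI impI zT)
        fix i assume i: "i < n"
        have eqm: "map (nth (xs @ ys)) (alphas ! i @ [m + i]) = map (nth xs) (alphas ! i) @ [ys ! i]"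
          using map_nth_app2[of "alphas ! i" xs i ys] aM i lx ly by simp
        have "map (nth (xs @ ys)) (alphas ! i @ [m + i]) \<in> h (Suc (length (alphas ! i))) (rs ! i)"
          unfolding eqm using ysi[OF i] by blast
        then show "xs @ ys \<in> h (m + n) (F i)"
          unfolding F_def Hsub[OF sb[OF i] rC[rule_format, OF i]] using zT by blast
      qed
      then show "xs \<in> h m (ex_iter L m n X)" using Hex_iter[OF XC] xs ys by blast
    qed
  qed
  have "ex_iter L m n X = Y" using Hinj[OF eC YC key] .
  then show "ex_iter L m (length alphas)
        (big_inf L (m + length alphas)
           (map (\<lambda>i. msubst L (m + length alphas) (alphas ! i @ [m + i]) (rs ! i)) [0..<length alphas]))
      = big_inf L m
           (map (\<lambda>i. msubst L m (alphas ! i) (ex_s L (length (alphas ! i)) (rs ! i))) [0..<length alphas])"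
    unfolding X_def Y_def F_def G_def n_def .
qed

lemma sound_all: "satisfies_axioms L"
  unfolding satisfies_axioms_def
  using s_ax0 s_ax1 s_ax2 s_ax3 s_ax4 s_ax5 s_ax6 s_ax7 s_ax8 s_ax9 s_ax10 by blast

end

theorem theorem4p5:
  fixes L :: "'a msalg"
  assumes "is_msalg L"
  shows "(satisfies_axioms L \<longrightarrow> (\<exists>W :: (nat \<times> 'a set) set. iso_to_subalg_of_fo L W))
       \<and> (\<forall>W :: 'w set. iso_to_subalg_of_fo L W \<longrightarrow> satisfies_axioms L)"
proof (intro conjI impI allI)
  assume ax: "satisfies_axioms L"
  interpret fol L using assms ax by unfold_locales
  show "\<exists>W :: (nat \<times> 'a set) set. iso_to_subalg_of_fo L W"
  proof (cases "ex_s L 0 (top_s L 1) = top_s L 0")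
    case True
    interpret fol_ne L using True by unfold_locales
    obtain W0 :: "'a trm set" where W0: "iso_to_subalg_of_fo L W0" using model_exists by blast
    obtain f :: "'a trm \<Rightarrow> nat \<times> 'a set" where f: "inj f" using trm_enc by blast
    have "iso_to_subalg_of_fo L (f ` W0)"
      by (rule transport[OF assms _ W0]) (use f in \<open>simp add: inj_on_def inj_def\<close>)
    then show ?thesis by blast
  next
    case False
    then show ?thesis using empty_case by blast
  qed
next
  fix W :: "'w set"
  assume "iso_to_subalg_of_fo L W"
  then obtain S h where sub: "subalgebra S (fo_alg W)" and bij: "\<And>n. bij_betw (h n) (carr L n) (carr ((fo_alg W)\<lparr>carr := S\<rparr>) n)"
    and hom: "is_hom h L ((fo_alg W)\<lparr>carr := S\<rparr>)"
    unfolding iso_to_subalg_of_fo_def is_iso_def by blast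
  interpret sound L W S h
    using assms sub bij hom by unfold_locales (simp_all add: is_hom_carr)
  show "satisfies_axioms L" by (rule sound_all)
qed

end
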